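(* Let $A$ be a commutative R$^*$-algebra and let $\widehat{A}$ be its norm completion (a commutative C$^*$-algebra). Then every projection of $\widehat{A}$ belongs to $A$. Consequently, if $K$ is a locally compact Hausdorff space with $\widehat{A}\cong C_0(K)$, then $K$ is zero-dimensional, and the generalized Boolean algebra of compact open subsets of $K$ is lattice isomorphic to $\mathcal{P}(A)$ (via the identification of projections in $C_0(K)$ with characteristic functions of compact open sets).
   Context: An R$^*$-algebra is a (not necessarily closed) $^*$-subalgebra $A$ of $B(H)$, $H$ a complex Hilbert space, such that every self-adjoint element of $A$ has finite spectrum; it is normed by the operator norm. $\mathcal{P}(A)$ is the lattice of projections $p=p^2=p^*$ in $A$ ordered by $p\le q$ iff $pq=p$. $C_0(K)$ is the C$^*$-algebra of continuous functions on $K$ vanishing at infinity. *)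

theory Defs
  imports "HOL-Analysis.Analysis"
begin

definition hnorm :: "('h \<Rightarrow> 'h \<Rightarrow> complex) \<Rightarrow> 'h \<Rightarrow> real" where
  "hnorm ip x = sqrt (Re (ip x x))"

definition complex_hilbert_space ::
  "(complex \<Rightarrow> 'h::ab_group_add \<Rightarrow> 'h) \<Rightarrow> ('h \<Rightarrow> 'h \<Rightarrow> complex) \<Rightarrow> bool" where
  "complex_hilbert_space sc ip \<longleftrightarrow>
     (\<forall>a x y. sc a (x + y) = sc a x + sc a y) \<and>
     (\<forall>a b x. sc (a + b) x = sc a x + sc b x) \<and>
     (\<forall>a b x. sc a (sc b x) = sc (a * b) x) \<and>
     (\<forall>x. sc 1 x = x) \<and>
     (\<forall>x y z. ip (x + y) z = ip x z + ip y z) \<and>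
     (\<forall>a x y. ip (sc a x) y = a * ip x y) \<and>
     (\<forall>x y. ip y x = cnj (ip x y)) \<and>
     (\<forall>x. Im (ip x x) = 0 \<and> Re (ip x x) \<ge> 0) \<and>
     (\<forall>x. ip x x = 0 \<longrightarrow> x = 0) \<and>
     (\<forall>X :: nat \<Rightarrow> 'h.
        (\<forall>e>0. \<exists>N. \<forall>m\<ge>N. \<forall>n\<ge>N. hnorm ip (X m - X n) < e) \<longrightarrow>
        (\<exists>L. (\<lambda>n. hnorm ip (X n - L)) \<longlonglongrightarrow> 0))"

definition bops ::
  "(complex \<Rightarrow> 'h::ab_group_add \<Rightarrow> 'h) \<Rightarrow> ('h \<Rightarrow> 'h \<Rightarrow> complex) \<Rightarrow> ('h \<Rightarrow> 'h) set" where
  "bops sc ip = {T. (\<forall>x y. T (x + y) = T x + T y) \<and> (\<forall>a x. T (sc a x) = sc a (T x)) \<and>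
                    (\<exists>C. \<forall>x. hnorm ip (T x) \<le> C * hnorm ip x)}"

definition opnorm :: "('h \<Rightarrow> 'h \<Rightarrow> complex) \<Rightarrow> ('h \<Rightarrow> 'h) \<Rightarrow> real" where
  "opnorm ip T = Sup {hnorm ip (T x) | x. hnorm ip x \<le> 1}"

definition adj :: "('h \<Rightarrow> 'h \<Rightarrow> complex) \<Rightarrow> ('h \<Rightarrow> 'h) \<Rightarrow> ('h \<Rightarrow> 'h)" where
  "adj ip T = (THE S. \<forall>x y. ip (T x) y = ip x (S y))"

definition op_spectrum ::
  "(complex \<Rightarrow> 'h::ab_group_add \<Rightarrow> 'h) \<Rightarrow> ('h \<Rightarrow> 'h \<Rightarrow> complex) \<Rightarrow> ('h \<Rightarrow> 'h) \<Rightarrow> complex set" where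
  "op_spectrum sc ip T = {l. \<not> (\<exists>S\<in>bops sc ip.
       (\<forall>x. S (T x - sc l x) = x) \<and> (\<forall>x. T (S x) - sc l (S x) = x))}"

definition star_subalgebra ::
  "(complex \<Rightarrow> 'h::ab_group_add \<Rightarrow> 'h) \<Rightarrow> ('h \<Rightarrow> 'h \<Rightarrow> complex) \<Rightarrow> ('h \<Rightarrow> 'h) set \<Rightarrow> bool" where
  "star_subalgebra sc ip A \<longleftrightarrow> A \<subseteq> bops sc ip \<and> (\<lambda>x. 0) \<in> A \<and>
     (\<forall>a\<in>A. \<forall>b\<in>A. (\<lambda>x. a x + b x) \<in> A) \<and>
     (\<forall>a\<in>A. \<forall>c. (\<lambda>x. sc c (a x)) \<in> A) \<and>
     (\<forall>a\<in>A. \<forall>b\<in>A. a \<circ> b \<in> A) \<and>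
     (\<forall>a\<in>A. adj ip a \<in> A)"

definition R_star_algebra ::
  "(complex \<Rightarrow> 'h::ab_group_add \<Rightarrow> 'h) \<Rightarrow> ('h \<Rightarrow> 'h \<Rightarrow> complex) \<Rightarrow> ('h \<Rightarrow> 'h) set \<Rightarrow> bool" where
  "R_star_algebra sc ip A \<longleftrightarrow> star_subalgebra sc ip A \<and>
     (\<forall>a\<in>A. adj ip a = a \<longrightarrow> finite (op_spectrum sc ip a))"

definition commutative_ops :: "('h \<Rightarrow> 'h) set \<Rightarrow> bool" where
  "commutative_ops A \<longleftrightarrow> (\<forall>a\<in>A. \<forall>b\<in>A. a \<circ> b = b \<circ> a)"

text \<open>The norm completion of A, realised as the operator-norm closure of A inside B(H).\<close>
definition norm_closure ::
  "(complex \<Rightarrow> 'h::ab_group_add \<Rightarrow> 'h) \<Rightarrow> ('h \<Rightarrow> 'h \<Rightarrow> complex) \<Rightarrow> ('h \<Rightarrow> 'h) set \<Rightarrow> ('h \<Rightarrow> 'h) set" where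
  "norm_closure sc ip A = {T\<in>bops sc ip. \<forall>e>0. \<exists>a\<in>A. opnorm ip (\<lambda>x. T x - a x) < e}"

definition is_projection :: "('h \<Rightarrow> 'h \<Rightarrow> complex) \<Rightarrow> ('h \<Rightarrow> 'h) \<Rightarrow> bool" where
  "is_projection ip p \<longleftrightarrow> p \<circ> p = p \<and> adj ip p = p"

definition projections ::
  "('h \<Rightarrow> 'h \<Rightarrow> complex) \<Rightarrow> ('h \<Rightarrow> 'h) set \<Rightarrow> ('h \<Rightarrow> 'h) set" where
  "projections ip A = {p\<in>A. is_projection ip p}"

definition proj_le :: "('h \<Rightarrow> 'h) \<Rightarrow> ('h \<Rightarrow> 'h) \<Rightarrow> bool" where
  "proj_le p q \<longleftrightarrow> p \<circ> q = p"

definition C0 :: "('k::topological_space \<Rightarrow> complex) set" where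
  "C0 = {f. continuous_on UNIV f \<and> (\<forall>e>0. compact {x. norm (f x) \<ge> e})}"

definition star_iso_onto_C0 ::
  "(complex \<Rightarrow> 'h::ab_group_add \<Rightarrow> 'h) \<Rightarrow> ('h \<Rightarrow> 'h \<Rightarrow> complex) \<Rightarrow> ('h \<Rightarrow> 'h) set
    \<Rightarrow> (('h \<Rightarrow> 'h) \<Rightarrow> ('k::topological_space \<Rightarrow> complex)) \<Rightarrow> bool" where
  "star_iso_onto_C0 sc ip B \<Phi> \<longleftrightarrow> bij_betw \<Phi> B C0 \<and>
     (\<forall>a\<in>B. \<forall>b\<in>B. \<Phi> (\<lambda>x. a x + b x) = (\<lambda>t. \<Phi> a t + \<Phi> b t)) \<and>
     (\<forall>a\<in>B. \<forall>c. \<Phi> (\<lambda>x. sc c (a x)) = (\<lambda>t. c * \<Phi> a t)) \<and>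
     (\<forall>a\<in>B. \<forall>b\<in>B. \<Phi> (a \<circ> b) = (\<lambda>t. \<Phi> a t * \<Phi> b t)) \<and>
     (\<forall>a\<in>B. \<Phi> (adj ip a) = (\<lambda>t. cnj (\<Phi> a t)))"

definition zero_dimensional_space :: "'k::topological_space itself \<Rightarrow> bool" where
  "zero_dimensional_space _ \<longleftrightarrow>
     (\<forall>U x. open (U::'k set) \<and> x \<in> U \<longrightarrow> (\<exists>V. open V \<and> closed V \<and> x \<in> V \<and> V \<subseteq> U))"

end

theory Submission
  imports Defs "HOL-Computational_Algebra.Fundamental_Theorem_Algebra"
begin


locale hilb =
  fixes sc :: "complex \<Rightarrow> 'h::ab_group_add \<Rightarrow> 'h" and ip :: "'h \<Rightarrow> 'h \<Rightarrow> complex"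
  assumes hs: "complex_hilbert_space sc ip"
begin

abbreviation nm where "nm \<equiv> hnorm ip"

lemmas H = hs[unfolded complex_hilbert_space_def]

lemma sc_add_right: "sc a (x + y) = sc a x + sc a y" using conjunct1[OF H] by blast
lemma sc_add_left: "sc (a + b) x = sc a x + sc b x" using conjunct1[OF conjunct2[OF H]] by blast
lemma sc_assoc: "sc a (sc b x) = sc (a * b) x" using conjunct1[OF conjunct2[OF conjunct2[OF H]]] by blast
lemma sc_one[simp]: "sc 1 x = x" using conjunct1[OF conjunct2[OF conjunct2[OF conjunct2[OF H]]]] by blast
lemma ip_add_left: "ip (x + y) z = ip x z + ip y z" using conjunct1[OF conjunct2[OF conjunct2[OF conjunct2[OF conjunct2[OF H]]]]] by blast
lemma ip_sc_left: "ip (sc a x) y = a * ip x y" using conjunct1[OF conjunct2[OF conjunct2[OF conjunct2[OF conjunct2[OF conjunct2[OF H]]]]]] by blast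
lemma ip_sym: "ip y x = cnj (ip x y)" using conjunct1[OF conjunct2[OF conjunct2[OF conjunct2[OF conjunct2[OF conjunct2[OF conjunct2[OF H]]]]]]] by blast
lemma ip_self_Im: "Im (ip x x) = 0" using conjunct1[OF conjunct2[OF conjunct2[OF conjunct2[OF conjunct2[OF conjunct2[OF conjunct2[OF conjunct2[OF H]]]]]]]] by blast
lemma ip_self_Re: "Re (ip x x) \<ge> 0" using conjunct1[OF conjunct2[OF conjunct2[OF conjunct2[OF conjunct2[OF conjunct2[OF conjunct2[OF conjunct2[OF H]]]]]]]] by blast
lemma ip_self_zero: "ip x x = 0 \<Longrightarrow> x = 0" using conjunct1[OF conjunct2[OF conjunct2[OF conjunct2[OF conjunct2[OF conjunct2[OF conjunct2[OF conjunct2[OF conjunct2[OF H]]]]]]]]] by blast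
lemma complete: "(\<forall>e>0. \<exists>N. \<forall>m\<ge>N. \<forall>n\<ge>N. hnorm ip (X m - X n) < e) \<Longrightarrow>
        (\<exists>L. (\<lambda>n. hnorm ip (X n - L)) \<longlonglongrightarrow> 0)" using conjunct2[OF conjunct2[OF conjunct2[OF conjunct2[OF conjunct2[OF conjunct2[OF conjunct2[OF conjunct2[OF conjunct2[OF H]]]]]]]]] by blast

lemma sc_zero_left[simp]: "sc 0 x = 0"
  using sc_add_left[of 0 0 x] by simp
lemma sc_zero_right[simp]: "sc a 0 = 0"
  using sc_add_right[of a 0 0] by simp
lemma sc_minus_right: "sc a (- x) = - sc a x"
  using sc_add_right[of a x "-x"] by (simp add: eq_neg_iff_add_eq_0 add.commute)
lemma sc_diff_right: "sc a (x - y) = sc a x - sc a y"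
  using sc_add_right[of a x "-y"] by (simp add: sc_minus_right)
lemma sc_minus_left: "sc (- a) x = - sc a x"
  using sc_add_left[of a "-a" x] by (simp add: eq_neg_iff_add_eq_0 add.commute)
lemma sc_diff_left: "sc (a - b) x = sc a x - sc b x"
  using sc_add_left[of a "-b" x] by (simp add: sc_minus_left)
lemma sc_sum_right: "sc a (sum f S) = (\<Sum>i\<in>S. sc a (f i))"
  by (induction S rule: infinite_finite_induct) (auto simp: sc_add_right)

lemma ip_zero_left[simp]: "ip 0 y = 0"
  using ip_add_left[of 0 0 y] by simp
lemma ip_minus_left: "ip (- x) y = - ip x y"
  using ip_add_left[of x "-x" y] by (simp add: eq_neg_iff_add_eq_0 add.commute)
lemma ip_diff_left: "ip (x - y) z = ip x z - ip y z"
  using ip_add_left[of x "-y" z] by (simp add: ip_minus_left)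
lemma ip_add_right: "ip x (y + z) = ip x y + ip x z"
  by (metis complex_cnj_add ip_add_left ip_sym)
lemma ip_sc_right: "ip x (sc a y) = cnj a * ip x y"
  by (metis complex_cnj_mult ip_sc_left ip_sym)
lemma ip_zero_right[simp]: "ip x 0 = 0"
  by (metis complex_cnj_zero ip_sym ip_zero_left)
lemma ip_minus_right: "ip x (- y) = - ip x y"
  by (metis complex_cnj_minus ip_minus_left ip_sym)
lemma ip_diff_right: "ip x (y - z) = ip x y - ip x z"
  using ip_add_right[of x y "-z"] by (simp add: ip_minus_right)

lemma ip_self_real: "ip x x = complex_of_real (Re (ip x x))"
  using ip_self_Im[of x] by (simp add: complex_eq_iff)

lemma nm_nonneg[simp]: "nm x \<ge> 0" using ip_self_Re[of x] by (simp add: hnorm_def)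
lemma nm_sq: "nm x ^ 2 = Re (ip x x)" using ip_self_Re[of x] by (simp add: hnorm_def)
lemma ip_self_nm: "ip x x = complex_of_real (nm x ^ 2)" using nm_sq ip_self_real by simp
lemma nm_zero_iff[simp]: "nm x = 0 \<longleftrightarrow> x = 0"
proof
  assume "nm x = 0" then have "ip x x = 0" using ip_self_nm[of x] by simp
  then show "x = 0" by (rule ip_self_zero)
qed (simp add: hnorm_def)
lemma nm_zero[simp]: "nm 0 = 0" by simp
lemma nm_pos: "x \<noteq> 0 \<Longrightarrow> nm x > 0" using nm_nonneg[of x] nm_zero_iff[of x] by linarith


lemma mult_cnj_self: "z * cnj z = complex_of_real (cmod z ^ 2)"
  using complex_norm_square[of z] by simp
lemma cnj_mult_self: "cnj z * z = complex_of_real (cmod z ^ 2)"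
  using complex_norm_square[of z] by (simp add: mult.commute)

lemma nm_sc: "nm (sc a x) = cmod a * nm x"
proof -
  have "ip (sc a x) (sc a x) = complex_of_real ((cmod a)^2) * ip x x"
  proof -
    have "cnj a * a = complex_of_real ((cmod a)^2)" using complex_norm_square[of a] by (simp add: mult.commute)
    then show ?thesis by (simp add: ip_sc_left ip_sc_right mult.assoc[symmetric] del: of_real_power)
  qed
  then have "nm (sc a x) ^ 2 = (cmod a)^2 * nm x ^ 2"
    using ip_self_nm[of "sc a x"] ip_self_nm[of x] by (metis of_real_eq_iff of_real_mult)
  then have "nm (sc a x) ^ 2 = (cmod a * nm x) ^ 2" by (simp add: power_mult_distrib)
  then show ?thesis using nm_nonneg by (simp add: power2_eq_iff_nonneg)
qed

lemma nm_minus: "nm (- x) = nm x"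
  using nm_sc[of "-1" x] by (simp add: sc_minus_left)
lemma nm_diff_commute: "nm (x - y) = nm (y - x)"
  by (metis minus_diff_eq nm_minus)

lemma nm_add_sq: "nm (x + y) ^ 2 = nm x ^ 2 + 2 * Re (ip x y) + nm y ^ 2"
proof -
  have "ip (x + y) (x + y) = ip x x + ip x y + cnj (ip x y) + ip y y"
    by (simp add: ip_add_left ip_add_right ip_sym[of x y])
  then have "Re (ip (x + y) (x + y)) = Re (ip x x) + 2 * Re (ip x y) + Re (ip y y)" by simp
  then show ?thesis by (simp add: nm_sq)
qed

lemma nm_diff_sq: "nm (x - y) ^ 2 = nm x ^ 2 - 2 * Re (ip x y) + nm y ^ 2"
  using nm_add_sq[of x "- y"] by (simp add: ip_minus_right nm_minus)

lemma quad_nonneg: "0 \<le> nm x ^ 2 - 2 * Re (cnj t * ip x y) + (cmod t)^2 * nm y ^ 2"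
proof -
  have "nm (x - sc t y) ^ 2 = nm x ^ 2 - 2 * Re (ip x (sc t y)) + nm (sc t y) ^ 2"
    by (rule nm_diff_sq)
  then show ?thesis by (metis ip_sc_right nm_sc power_mult_distrib zero_le_power2)
qed

lemma cauchy_schwarz: "cmod (ip x y) \<le> nm x * nm y"
proof (cases "y = 0")
  case True then show ?thesis by simp
next
  case False
  define b where "b = nm y ^ 2"
  have b: "b > 0" using False nm_pos unfolding b_def by simp
  define t where "t = ip x y / complex_of_real b"
  have "cnj t * ip x y = complex_of_real ((cmod (ip x y))^2 / b)"
    unfolding t_def by (simp add: cnj_mult_self del: of_real_power)
  moreover have "(cmod t)^2 = (cmod (ip x y))^2 / b^2"
    unfolding t_def using b by (simp add: norm_divide power_divide)
  ultimately have "0 \<le> nm x ^ 2 - 2 * ((cmod (ip x y))^2 / b) + (cmod (ip x y))^2 / b^2 * b"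
    using quad_nonneg[of x t y] unfolding b_def[symmetric] by simp
  also have "\<dots> = nm x ^ 2 - (cmod (ip x y))^2 / b" using b by (simp add: power2_eq_square field_simps)
  finally have "(cmod (ip x y))^2 \<le> nm x ^ 2 * b" using b by (simp add: field_simps)
  then have "(cmod (ip x y))^2 \<le> (nm x * nm y)^2" unfolding b_def by (simp add: power_mult_distrib)
  then show ?thesis using power2_le_imp_le by fastforce
qed

lemma Re_ip_le: "Re (ip x y) \<le> nm x * nm y"
  using cauchy_schwarz[of x y] complex_Re_le_cmod order_trans by blast

lemma nm_triangle: "nm (x + y) \<le> nm x + nm y"
proof -
  have "nm (x + y) ^ 2 \<le> (nm x + nm y) ^ 2"
    using nm_add_sq[of x y] Re_ip_le[of x y] by (simp add: power2_eq_square algebra_simps)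
  then show ?thesis using power2_le_imp_le by fastforce
qed

lemma nm_diff_le: "nm (x - y) \<le> nm x + nm y"
  using nm_triangle[of x "-y"] by (simp add: nm_minus)

lemma nm_rev_triangle: "nm x - nm y \<le> nm (x - y)"
  using nm_triangle[of "x - y" y] by simp

lemma nm_diff_triangle: "nm (x - z) \<le> nm (x - y) + nm (y - z)"
  using nm_triangle[of "x - y" "y - z"] by simp

lemma nm_sum: "nm (sum f S) \<le> (\<Sum>i\<in>S. nm (f i))"
proof (induction S rule: infinite_finite_induct)
  case (insert x F)
  then show ?case using nm_triangle[of "f x" "sum f F"] by simp
qed simp_all

end


context hilb begin

definition lin :: "('h \<Rightarrow> 'h) \<Rightarrow> bool" where
  "lin T \<longleftrightarrow> (\<forall>x y. T (x + y) = T x + T y) \<and> (\<forall>a x. T (sc a x) = sc a (T x))"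

lemma bops_iff: "T \<in> bops sc ip \<longleftrightarrow> lin T \<and> (\<exists>C. \<forall>x. nm (T x) \<le> C * nm x)"
  unfolding bops_def lin_def by auto

lemma bopsI: "lin T \<Longrightarrow> (\<And>x. nm (T x) \<le> C * nm x) \<Longrightarrow> T \<in> bops sc ip"
  unfolding bops_iff by blast

lemma bops_lin: "T \<in> bops sc ip \<Longrightarrow> lin T" unfolding bops_iff by blast

lemma lin_add: "lin T \<Longrightarrow> T (x + y) = T x + T y" unfolding lin_def by blast
lemma lin_sc: "lin T \<Longrightarrow> T (sc a x) = sc a (T x)" unfolding lin_def by blast
lemma lin_zero: "lin T \<Longrightarrow> T 0 = 0" using lin_add[of T 0 0] by simp
lemma lin_minus: "lin T \<Longrightarrow> T (- x) = - T x"
  using lin_add[of T x "-x"] lin_zero[of T] by (simp add: eq_neg_iff_add_eq_0 add.commute)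
lemma lin_diff: "lin T \<Longrightarrow> T (x - y) = T x - T y"
  using lin_add[of T x "-y"] lin_minus[of T y] by simp
lemma lin_sum: "lin T \<Longrightarrow> T (sum f S) = (\<Sum>i\<in>S. T (f i))"
  by (induction S rule: infinite_finite_induct) (auto simp: lin_add lin_zero)

lemma lin_id: "lin (\<lambda>x. x)" unfolding lin_def by simp
lemma lin_0: "lin (\<lambda>x. 0)" unfolding lin_def by simp
lemma lin_plus: "lin T \<Longrightarrow> lin S \<Longrightarrow> lin (\<lambda>x. T x + S x)"
  unfolding lin_def by (simp add: sc_add_right algebra_simps)
lemma lin_minus_op: "lin T \<Longrightarrow> lin S \<Longrightarrow> lin (\<lambda>x. T x - S x)"
  unfolding lin_def by (simp add: sc_diff_right algebra_simps)
lemma lin_scale: "lin T \<Longrightarrow> lin (\<lambda>x. sc c (T x))"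
  unfolding lin_def by (simp add: sc_add_right sc_assoc mult.commute)
lemma lin_comp: "lin T \<Longrightarrow> lin S \<Longrightarrow> lin (T \<circ> S)"
  unfolding lin_def by simp
lemma lin_sc_id: "lin (\<lambda>x. sc c x)"
  unfolding lin_def by (simp add: sc_add_right sc_assoc mult.commute)

lemma bops_bound: "T \<in> bops sc ip \<Longrightarrow> \<exists>C\<ge>0. \<forall>x. nm (T x) \<le> C * nm x"
proof -
  assume "T \<in> bops sc ip"
  then obtain C where C: "\<And>x. nm (T x) \<le> C * nm x" unfolding bops_iff by blast
  have "nm (T x) \<le> max C 0 * nm x" for x
    using C[of x] by (metis max.cobounded1 mult_right_mono nm_nonneg order_trans)
  then show ?thesis by (intro exI[of _ "max C 0"]) auto
qed

lemma opnorm_set_bdd: "T \<in> bops sc ip \<Longrightarrow> bdd_above {nm (T x) |x. nm x \<le> 1}"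
proof -
  assume "T \<in> bops sc ip"
  then obtain C where "C \<ge> 0" "\<And>x. nm (T x) \<le> C * nm x" using bops_bound by blast
  then have "\<And>x. nm x \<le> 1 \<Longrightarrow> nm (T x) \<le> C"
    by (metis mult_left_le order_trans)
  then show ?thesis unfolding bdd_above_def by blast
qed

lemma opnorm_ge: "T \<in> bops sc ip \<Longrightarrow> nm x \<le> 1 \<Longrightarrow> nm (T x) \<le> opnorm ip T"
  unfolding opnorm_def by (rule cSup_upper) (auto simp: opnorm_set_bdd)

lemma opnorm_nonneg: "T \<in> bops sc ip \<Longrightarrow> opnorm ip T \<ge> 0"
proof -
  assume T: "T \<in> bops sc ip"
  have "nm (T 0) \<le> opnorm ip T" using opnorm_ge[OF T, of 0] by simp
  then show ?thesis using nm_nonneg[of "T 0"] by linarith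
qed

lemma opnorm_bound: "T \<in> bops sc ip \<Longrightarrow> nm (T x) \<le> opnorm ip T * nm x"
proof (cases "x = 0")
  case True
  assume T: "T \<in> bops sc ip"
  have "T 0 = 0" by (rule lin_zero[OF bops_lin[OF T]])
  then show ?thesis using True by simp
next
  case False
  assume T: "T \<in> bops sc ip"
  define u where "u = sc (complex_of_real (1 / nm x)) x"
  have nx: "nm x > 0" using False nm_pos by blast
  have "nm u = 1" unfolding u_def using nx False by (simp add: nm_sc norm_divide)
  then have "nm (T u) \<le> opnorm ip T" using opnorm_ge[OF T] by simp
  moreover have "nm (T u) = nm (T x) / nm x"
    unfolding u_def using nx lin_sc[OF bops_lin[OF T]] by (simp add: nm_sc norm_divide)
  ultimately show ?thesis using nx by (simp add: field_simps)
qed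

lemma opnorm_le: "T \<in> bops sc ip \<Longrightarrow> C \<ge> 0 \<Longrightarrow> (\<And>x. nm (T x) \<le> C * nm x) \<Longrightarrow> opnorm ip T \<le> C"
  unfolding opnorm_def
proof (rule cSup_least)
  show "{nm (T x) |x. nm x \<le> 1} \<noteq> {}" by (auto intro: exI[of _ 0])
next
  fix y assume "C \<ge> 0" "\<And>x. nm (T x) \<le> C * nm x" "y \<in> {nm (T x) |x. nm x \<le> 1}"
  then show "y \<le> C" by (smt (verit) mem_Collect_eq mult_left_le)
qed

lemma opnorm_approx: "T \<in> bops sc ip \<Longrightarrow> e > 0 \<Longrightarrow> \<exists>x. nm x \<le> 1 \<and> nm (T x) > opnorm ip T - e"
proof (rule ccontr)
  assume T: "T \<in> bops sc ip" and e: "e > 0" and "\<not> (\<exists>x. nm x \<le> 1 \<and> nm (T x) > opnorm ip T - e)"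
  then have "\<And>x. nm x \<le> 1 \<Longrightarrow> nm (T x) \<le> opnorm ip T - e" by force
  then have "opnorm ip T \<le> opnorm ip T - e" unfolding opnorm_def[of ip T]
    by (intro cSup_least) (auto intro: exI[of _ 0])
  then show False using e by simp
qed

lemma opnorm_zero_iff: "T \<in> bops sc ip \<Longrightarrow> opnorm ip T = 0 \<longleftrightarrow> T = (\<lambda>x. 0)"
proof
  assume T: "T \<in> bops sc ip" and "opnorm ip T = 0"
  then have "nm (T x) = 0" for x using opnorm_bound[OF T, of x] nm_nonneg[of "T x"] by simp
  then show "T = (\<lambda>x. 0)" by auto
next
  assume "T = (\<lambda>x. 0)"
  then show "opnorm ip T = 0"
  proof -
    have "{nm (T x) |x. nm x \<le> 1} = {0}" using \<open>T = (\<lambda>x. 0)\<close> by (auto intro: exI[of _ 0])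
    then show ?thesis unfolding opnorm_def by simp
  qed
qed

lemma bops_zero: "(\<lambda>x. 0) \<in> bops sc ip" by (rule bopsI[where C=0]) (auto simp: lin_0)
lemma bops_id: "(\<lambda>x. x) \<in> bops sc ip" by (rule bopsI[where C=1]) (auto simp: lin_id)
lemma bops_sc_id: "(\<lambda>x. sc c x) \<in> bops sc ip" by (rule bopsI[where C="cmod c"]) (auto simp: lin_sc_id nm_sc)

lemma bops_plus: assumes "T \<in> bops sc ip" "S \<in> bops sc ip"
  shows "(\<lambda>x. T x + S x) \<in> bops sc ip" "opnorm ip (\<lambda>x. T x + S x) \<le> opnorm ip T + opnorm ip S"
proof -
  have b: "nm (T x + S x) \<le> (opnorm ip T + opnorm ip S) * nm x" for x
    using nm_triangle[of "T x" "S x"] opnorm_bound[OF assms(1), of x] opnorm_bound[OF assms(2), of x]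
    by (simp add: distrib_right)
  show 1: "(\<lambda>x. T x + S x) \<in> bops sc ip" using b lin_plus bops_lin assms by (blast intro: bopsI)
  show "opnorm ip (\<lambda>x. T x + S x) \<le> opnorm ip T + opnorm ip S"
    by (rule opnorm_le[OF 1]) (use b opnorm_nonneg assms in auto)
qed

lemma bops_diff: assumes "T \<in> bops sc ip" "S \<in> bops sc ip"
  shows "(\<lambda>x. T x - S x) \<in> bops sc ip" "opnorm ip (\<lambda>x. T x - S x) \<le> opnorm ip T + opnorm ip S"
proof -
  have b: "nm (T x - S x) \<le> (opnorm ip T + opnorm ip S) * nm x" for x
    using nm_diff_le[of "T x" "S x"] opnorm_bound[OF assms(1), of x] opnorm_bound[OF assms(2), of x]
    by (simp add: distrib_right)
  show 1: "(\<lambda>x. T x - S x) \<in> bops sc ip" using b lin_minus_op bops_lin assms by (blast intro: bopsI)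
  show "opnorm ip (\<lambda>x. T x - S x) \<le> opnorm ip T + opnorm ip S"
    by (rule opnorm_le[OF 1]) (use b opnorm_nonneg assms in auto)
qed

lemma bops_scale: assumes "T \<in> bops sc ip"
  shows "(\<lambda>x. sc c (T x)) \<in> bops sc ip" "opnorm ip (\<lambda>x. sc c (T x)) \<le> cmod c * opnorm ip T"
proof -
  have b: "nm (sc c (T x)) \<le> (cmod c * opnorm ip T) * nm x" for x
    using opnorm_bound[OF assms(1), of x] by (simp add: nm_sc mult.assoc mult_left_mono)
  show 1: "(\<lambda>x. sc c (T x)) \<in> bops sc ip" using b lin_scale bops_lin assms by (blast intro: bopsI)
  show "opnorm ip (\<lambda>x. sc c (T x)) \<le> cmod c * opnorm ip T"
    by (rule opnorm_le[OF 1]) (use b opnorm_nonneg assms in auto)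
qed

lemma bops_comp: assumes "T \<in> bops sc ip" "S \<in> bops sc ip"
  shows "T \<circ> S \<in> bops sc ip" "opnorm ip (T \<circ> S) \<le> opnorm ip T * opnorm ip S"
proof -
  have b: "nm (T (S x)) \<le> (opnorm ip T * opnorm ip S) * nm x" for x
    using opnorm_bound[OF assms(1), of "S x"] opnorm_bound[OF assms(2), of x] opnorm_nonneg[OF assms(1)]
    by (smt (verit, best) mult.assoc mult_left_mono)
  show 1: "T \<circ> S \<in> bops sc ip" using b lin_comp bops_lin assms by (auto intro!: bopsI)
  show "opnorm ip (T \<circ> S) \<le> opnorm ip T * opnorm ip S"
    by (rule opnorm_le[OF 1]) (use b opnorm_nonneg assms in auto)
qed

lemma opnorm_diff_commute: "T \<in> bops sc ip \<Longrightarrow> S \<in> bops sc ip \<Longrightarrow> opnorm ip (\<lambda>x. T x - S x) = opnorm ip (\<lambda>x. S x - T x)"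
proof -
  have "nm (T x - S x) = nm (S x - T x)" for x by (rule nm_diff_commute)
  then show ?thesis unfolding opnorm_def by simp
qed

lemma opnorm_diff_triangle:
  assumes "T \<in> bops sc ip" "S \<in> bops sc ip" "R \<in> bops sc ip"
  shows "opnorm ip (\<lambda>x. T x - R x) \<le> opnorm ip (\<lambda>x. T x - S x) + opnorm ip (\<lambda>x. S x - R x)"
proof -
  have "(\<lambda>x. T x - R x) = (\<lambda>x. (T x - S x) + (S x - R x))" by simp
  then show ?thesis using bops_plus(2)[OF bops_diff(1)[OF assms(1,2)] bops_diff(1)[OF assms(2,3)]] by simp
qed

end


context hilb begin

definition csub :: "'h set \<Rightarrow> bool" where
  "csub M \<longleftrightarrow> 0 \<in> M \<and> (\<forall>x\<in>M. \<forall>y\<in>M. x + y \<in> M) \<and> (\<forall>a. \<forall>x\<in>M. sc a x \<in> M) \<and>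
     (\<forall>X L. (\<forall>n. X n \<in> M) \<and> (\<lambda>n. nm (X n - L)) \<longlonglongrightarrow> 0 \<longrightarrow> L \<in> M)"

lemma csub_add: "csub M \<Longrightarrow> x \<in> M \<Longrightarrow> y \<in> M \<Longrightarrow> x + y \<in> M" unfolding csub_def by blast
lemma csub_sc: "csub M \<Longrightarrow> x \<in> M \<Longrightarrow> sc a x \<in> M" unfolding csub_def by blast
lemma csub_0: "csub M \<Longrightarrow> 0 \<in> M" unfolding csub_def by blast
lemma csub_closed: "csub M \<Longrightarrow> (\<And>n. X n \<in> M) \<Longrightarrow> (\<lambda>n. nm (X n - L)) \<longlonglongrightarrow> 0 \<Longrightarrow> L \<in> M"
  unfolding csub_def by blast

lemma sc_two: "sc 2 x = x + x"
  using sc_add_left[of 1 1 x] by simp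

lemma parallelogram: "nm (u + v) ^ 2 + nm (u - v) ^ 2 = 2 * nm u ^ 2 + 2 * nm v ^ 2"
  using nm_add_sq[of u v] nm_diff_sq[of u v] by simp

lemma quad_opt:
  assumes "y \<noteq> 0"
  shows "nm (x - sc (ip x y / complex_of_real (nm y ^ 2)) y) ^ 2 = nm x ^ 2 - (cmod (ip x y))^2 / nm y ^ 2"
proof -
  define b where "b = nm y ^ 2"
  have b: "b > 0" using assms nm_pos unfolding b_def by simp
  define t where "t = ip x y / complex_of_real b"
  have e: "nm (x - sc t y) ^ 2 = nm x ^ 2 - 2 * Re (ip x (sc t y)) + nm (sc t y) ^ 2" by (rule nm_diff_sq)
  have "ip x (sc t y) = complex_of_real ((cmod (ip x y))^2 / b)"
    unfolding t_def by (simp add: ip_sc_right cnj_mult_self del: of_real_power)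
  moreover have "nm (sc t y) ^ 2 = (cmod (ip x y))^2 / b"
  proof -
    have cb: "cmod (complex_of_real b) = b" using b by simp
    have "nm (sc t y) ^ 2 = (cmod (ip x y))^2 / b^2 * b"
      unfolding t_def by (simp add: nm_sc norm_divide cb power_divide power_mult_distrib b_def[symmetric])
    then show ?thesis using b by (simp add: power2_eq_square)
  qed
  ultimately show ?thesis using e unfolding t_def b_def by simp
qed

lemma proj_exists:
  assumes M: "csub M"
  shows "\<exists>m\<in>M. \<forall>y\<in>M. ip (x - m) y = 0"
proof -
  define D where "D = (\<lambda>m. nm (x - m)) ` M"
  define d where "d = Inf D"
  have Dne: "D \<noteq> {}" using csub_0[OF M] unfolding D_def by blast
  have Dbdd: "bdd_below D" unfolding D_def bdd_below_def by (auto intro: exI[of _ 0])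
  have dle: "d \<le> nm (x - m)" if "m \<in> M" for m
    unfolding d_def D_def using Dbdd that unfolding D_def by (auto intro: cInf_lower)
  have d0: "d \<ge> 0" unfolding d_def using Dne by (intro cInf_greatest) (auto simp: D_def)
  have "\<exists>m\<in>M. nm (x - m) < d + 1 / real (Suc n)" for n
  proof -
    have "Inf D < d + 1 / real (Suc n)" unfolding d_def by simp
    then obtain v where "v \<in> D" "v < d + 1 / real (Suc n)" using cInf_less_iff[OF Dne Dbdd] by blast
    then show ?thesis unfolding D_def by blast
  qed
  then obtain X where XM: "\<And>n. X n \<in> M" and Xd: "\<And>n. nm (x - X n) < d + 1 / real (Suc n)"
    by metis
  have sq: "nm (x - X n) ^ 2 \<le> d ^ 2 + (2 * d + 1) / real (Suc n)" for n
  proof -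
    define e where "e = 1 / real (Suc n)"
    have e0: "0 < e" "e \<le> 1" unfolding e_def by auto
    have "nm (x - X n) ^ 2 \<le> (d + e) ^ 2"
      using Xd[of n] unfolding e_def[symmetric] by (intro power_mono) auto
    also have "\<dots> = d^2 + 2 * d * e + e * e" by (simp add: power2_eq_square algebra_simps)
    also have "\<dots> \<le> d^2 + 2 * d * e + e" using e0 by (simp add: mult_left_le)
    finally show ?thesis unfolding e_def by (simp add: add_divide_distrib)
  qed
  have cauchy_bd: "nm (X n - X k) ^ 2 \<le> 2 * (2 * d + 1) * (1 / real (Suc n) + 1 / real (Suc k))" for n k
  proof -
    define u where "u = x - X n"
    define v where "v = x - X k"
    define mid where "mid = sc (1/2) (X n + X k)"
    have midM: "mid \<in> M" unfolding mid_def using XM M by (simp add: csub_add csub_sc)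
    have "u + v = sc 2 (x - mid)"
      unfolding u_def v_def mid_def by (simp add: sc_diff_right sc_assoc sc_two algebra_simps)
    then have "nm (u + v) = 2 * nm (x - mid)" by (simp add: nm_sc)
    then have "nm (u + v) ^ 2 \<ge> 4 * d ^ 2"
      using dle[OF midM] d0 by (simp add: power_mult_distrib power_mono)
    moreover have "u - v = X k - X n" unfolding u_def v_def by simp
    ultimately have "nm (X k - X n) ^ 2 \<le> 2 * nm u ^ 2 + 2 * nm v ^ 2 - 4 * d ^ 2"
      using parallelogram[of u v] by simp
    also have "\<dots> \<le> 2 * ((2*d+1) / real (Suc n)) + 2 * ((2*d+1) / real (Suc k))"
      using sq[of n] sq[of k] unfolding u_def v_def by linarith
    also have "\<dots> = 2 * (2 * d + 1) * (1 / real (Suc n) + 1 / real (Suc k))"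
      by (simp add: field_simps)
    finally show ?thesis by (simp add: nm_diff_commute)
  qed
  have "\<forall>e>0. \<exists>N. \<forall>m\<ge>N. \<forall>n\<ge>N. nm (X m - X n) < e"
  proof (intro allI impI)
    fix e :: real assume e: "e > 0"
    obtain N :: nat where N0: "4 * (2 * d + 1) / (e^2) < real N"
      using reals_Archimedean2 by blast
    then have N: "4 * (2 * d + 1) / (e^2) < real (Suc N)" by simp
    have "nm (X m - X n) < e" if "m \<ge> N" "n \<ge> N" for m n
    proof -
      have a: "1 / real (Suc m) \<le> 1 / real (Suc N)" "1 / real (Suc n) \<le> 1 / real (Suc N)"
        using that by (auto simp: frac_le)
      have "nm (X m - X n) ^ 2 \<le> 2 * (2 * d + 1) * (1 / real (Suc m) + 1 / real (Suc n))" by (rule cauchy_bd)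
      also have "\<dots> \<le> 2 * (2 * d + 1) * (2 / real (Suc N))"
        using a d0 by (intro mult_left_mono) auto
      also have "\<dots> = 4 * (2 * d + 1) / real (Suc N)" by simp
      also have "\<dots> < e ^ 2"
      proof -
        have "4 * (2 * d + 1) < real (Suc N) * e ^ 2" using N e by (simp add: pos_divide_less_eq)
        then show ?thesis by (simp add: pos_divide_less_eq mult.commute)
      qed
      finally have "nm (X m - X n) ^ 2 < e ^ 2" .
      then show ?thesis using e by (auto intro: power2_less_imp_less)
    qed
    then show "\<exists>N. \<forall>m\<ge>N. \<forall>n\<ge>N. nm (X m - X n) < e" by blast
  qed
  then obtain L where L: "(\<lambda>n. nm (X n - L)) \<longlonglongrightarrow> 0" using complete by blast
  have LM: "L \<in> M" using csub_closed[OF M XM L] .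
  have "nm (x - L) \<le> d"
  proof (rule LIMSEQ_le_const)
    have "(\<lambda>n. d + inverse (real (Suc n)) + nm (X n - L)) \<longlonglongrightarrow> d + 0 + 0"
      by (intro tendsto_add tendsto_const L LIMSEQ_inverse_real_of_nat)
    then show "(\<lambda>n. d + 1 / real (Suc n) + nm (X n - L)) \<longlonglongrightarrow> d"
      by (simp add: inverse_eq_divide)
    show "\<exists>N. \<forall>n\<ge>N. nm (x - L) \<le> d + 1 / real (Suc n) + nm (X n - L)"
    proof (intro exI allI impI)
      fix n
      show "nm (x - L) \<le> d + 1 / real (Suc n) + nm (X n - L)"
        using Xd[of n] nm_diff_triangle[of x L "X n"] by linarith
    qed
  qed
  then have opt: "nm (x - L) \<le> nm (x - m)" if "m \<in> M" for m using dle[OF that] by linarith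
  have "ip (x - L) y = 0" if yM: "y \<in> M" for y
  proof (cases "y = 0")
    case True then show ?thesis by simp
  next
    case False
    define t where "t = ip (x - L) y / complex_of_real (nm y ^ 2)"
    have "L + sc t y \<in> M" using M LM yM by (simp add: csub_add csub_sc)
    then have "nm (x - L) \<le> nm ((x - L) - sc t y)" using opt by (simp add: algebra_simps)
    then have "nm (x - L) ^ 2 \<le> nm ((x - L) - sc t y) ^ 2" by (simp add: power_mono)
    also have "\<dots> = nm (x - L) ^ 2 - (cmod (ip (x - L) y))^2 / nm y ^ 2"
      unfolding t_def by (rule quad_opt[OF False])
    finally have "(cmod (ip (x - L) y))^2 / nm y ^ 2 \<le> 0" by simp
    moreover have "nm y ^ 2 > 0" using False nm_pos by simp
    ultimately have "(cmod (ip (x - L) y))^2 \<le> 0" by (simp add: divide_le_0_iff)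
    then show ?thesis by simp
  qed
  then show ?thesis using LM by blast
qed

end


context hilb begin

lemma ip_ext: "(\<And>x. ip x u = ip x v) \<Longrightarrow> u = v"
proof -
  assume h: "\<And>x. ip x u = ip x v"
  have "ip (u - v) (u - v) = 0" using h[of "u - v"] by (simp add: ip_diff_right)
  then have "u - v = 0" by (rule ip_self_zero)
  then show "u = v" by simp
qed

lemma ip_ext_left: "(\<And>y. ip u y = ip v y) \<Longrightarrow> u = v"
  by (rule ip_ext) (metis ip_sym)

lemma riesz:
  assumes add: "\<And>x y. f (x + y) = f x + f y" and scl: "\<And>a x. f (sc a x) = a * f x"
    and bd: "\<And>x. cmod (f x) \<le> C * nm x"
  shows "\<exists>w. \<forall>x. f x = ip x w"
proof (cases "\<forall>x. f x = 0")
  case True then show ?thesis by (intro exI[of _ 0]) simp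
next
  case False
  then obtain x0 where x0: "f x0 \<noteq> 0" by blast
  have f0: "f 0 = 0" using add[of 0 0] by simp
  have fminus: "f (- x) = - f x" for x using add[of x "-x"] f0 by (simp add: eq_neg_iff_add_eq_0 add.commute)
  have fdiff: "f (x - y) = f x - f y" for x y using add[of x "-y"] fminus[of y] by simp
  define M where "M = {x. f x = 0}"
  have M: "csub M" unfolding csub_def M_def
  proof (intro conjI allI ballI impI)
    fix X L assume h: "(\<forall>n. X n \<in> {x. f x = 0}) \<and> (\<lambda>n. nm (X n - L)) \<longlonglongrightarrow> 0"
    have "cmod (f L) \<le> 0"
    proof (rule LIMSEQ_le_const)
      have "(\<lambda>n. C * nm (X n - L)) \<longlonglongrightarrow> C * 0" using h by (intro tendsto_mult tendsto_const) auto
      then show "(\<lambda>n. C * nm (X n - L)) \<longlonglongrightarrow> 0" by simp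
      show "\<exists>N. \<forall>n\<ge>N. cmod (f L) \<le> C * nm (X n - L)"
      proof (intro exI allI impI)
        fix n
        have "f L = - f (X n - L)" using h fdiff[of "X n" L] by simp
        then show "cmod (f L) \<le> C * nm (X n - L)" using bd[of "X n - L"] by simp
      qed
    qed
    then show "L \<in> {x. f x = 0}" by simp
  qed (auto simp: f0 add scl)
  obtain m where mM: "m \<in> M" and orth: "\<And>y. y \<in> M \<Longrightarrow> ip (x0 - m) y = 0"
    using proj_exists[OF M, of x0] by blast
  define z where "z = x0 - m"
  have fz: "f z = f x0" unfolding z_def using mM fdiff by (simp add: M_def)
  then have z0: "z \<noteq> 0" using x0 f0 by auto
  have izz: "ip z z \<noteq> 0" using z0 ip_self_zero by blast
  define w where "w = sc (cnj (f z / ip z z)) z"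
  have "f x = ip x w" for x
  proof -
    have "x - sc (f x / f z) z \<in> M" unfolding M_def using fz x0 by (simp add: fdiff scl)
    then have "ip z (x - sc (f x / f z) z) = 0" using orth unfolding z_def by blast
    then have "ip (x - sc (f x / f z) z) z = 0" using ip_sym by (metis complex_cnj_zero)
    then have "ip x z = f x / f z * ip z z" by (simp add: ip_diff_left ip_sc_left)
    then show ?thesis unfolding w_def using izz fz x0 by (simp add: ip_sc_right field_simps)
  qed
  then show ?thesis by blast
qed

lemma adj_exists: assumes T: "T \<in> bops sc ip" shows "\<exists>S. \<forall>x y. ip (T x) y = ip x (S y)"
proof -
  have "\<exists>w. \<forall>x. ip (T x) y = ip x w" for y
  proof (rule riesz)
    show "ip (T (x + x')) y = ip (T x) y + ip (T x') y" for x x'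
      using lin_add[OF bops_lin[OF T]] by (simp add: ip_add_left)
    show "ip (T (sc a x)) y = a * ip (T x) y" for a x
      using lin_sc[OF bops_lin[OF T]] by (simp add: ip_sc_left)
    show "cmod (ip (T x) y) \<le> (opnorm ip T * nm y) * nm x" for x
      using cauchy_schwarz[of "T x" y] opnorm_bound[OF T, of x]
      by (smt (verit, ccfv_SIG) mult.commute mult.left_commute mult_right_mono nm_nonneg)
  qed
  then show ?thesis by metis
qed

lemma adj_unique: "(\<And>x y. ip (T x) y = ip x (S y)) \<Longrightarrow> adj ip T = S"
  unfolding adj_def
proof (rule the_equality)
  fix S' assume h: "\<And>x y. ip (T x) y = ip x (S y)" and h': "\<forall>x y. ip (T x) y = ip x (S' y)"
  show "S' = S"
  proof
    fix y show "S' y = S y" by (rule ip_ext) (metis h h')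
  qed
qed blast

lemma adj_prop: "T \<in> bops sc ip \<Longrightarrow> ip (T x) y = ip x (adj ip T y)"
  using adj_exists adj_unique by metis

lemma adj_prop2: "T \<in> bops sc ip \<Longrightarrow> ip (adj ip T x) y = ip x (T y)"
  by (metis adj_prop ip_sym)

lemma adj_bops: assumes T: "T \<in> bops sc ip"
  shows "adj ip T \<in> bops sc ip" "opnorm ip (adj ip T) \<le> opnorm ip T"
proof -
  let ?S = "adj ip T"
  have l: "lin ?S" unfolding lin_def
  proof (intro conjI allI)
    fix y z show "?S (y + z) = ?S y + ?S z"
      by (rule ip_ext) (simp add: adj_prop[OF T, symmetric] ip_add_right)
  next
    fix a y show "?S (sc a y) = sc a (?S y)"
      by (rule ip_ext) (simp add: adj_prop[OF T, symmetric] ip_sc_right)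
  qed
  have b: "nm (?S y) \<le> opnorm ip T * nm y" for y
  proof (cases "?S y = 0")
    case True then show ?thesis using opnorm_nonneg[OF T] by simp
  next
    case False
    have "nm (?S y) ^ 2 = Re (ip (T (?S y)) y)" by (simp add: nm_sq adj_prop[OF T])
    also have "\<dots> \<le> nm (T (?S y)) * nm y" by (rule Re_ip_le)
    also have "\<dots> \<le> opnorm ip T * nm (?S y) * nm y"
      using opnorm_bound[OF T] by (simp add: mult_right_mono)
    finally have "nm (?S y) * nm (?S y) \<le> (opnorm ip T * nm y) * nm (?S y)"
      by (simp add: power2_eq_square mult_ac)
    then show ?thesis using nm_pos[OF False] by simp
  qed
  show 1: "?S \<in> bops sc ip" using l b by (rule bopsI)
  show "opnorm ip ?S \<le> opnorm ip T" by (rule opnorm_le[OF 1 opnorm_nonneg[OF T] b])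
qed

lemma adj_adj: "T \<in> bops sc ip \<Longrightarrow> adj ip (adj ip T) = T"
  by (rule adj_unique) (simp add: adj_prop2)

lemma adj_plus: "T \<in> bops sc ip \<Longrightarrow> S \<in> bops sc ip \<Longrightarrow>
   adj ip (\<lambda>x. T x + S x) = (\<lambda>x. adj ip T x + adj ip S x)"
  by (rule adj_unique) (simp add: ip_add_left ip_add_right adj_prop)

lemma adj_diff: "T \<in> bops sc ip \<Longrightarrow> S \<in> bops sc ip \<Longrightarrow>
   adj ip (\<lambda>x. T x - S x) = (\<lambda>x. adj ip T x - adj ip S x)"
  by (rule adj_unique) (simp add: ip_diff_left ip_diff_right adj_prop)

lemma adj_scale: "T \<in> bops sc ip \<Longrightarrow> adj ip (\<lambda>x. sc c (T x)) = (\<lambda>x. sc (cnj c) (adj ip T x))"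
  by (rule adj_unique) (simp add: ip_sc_left ip_sc_right adj_prop)

lemma adj_comp: "T \<in> bops sc ip \<Longrightarrow> S \<in> bops sc ip \<Longrightarrow> adj ip (T \<circ> S) = adj ip S \<circ> adj ip T"
  by (rule adj_unique) (simp add: adj_prop)

lemma adj_sc_id: "adj ip (\<lambda>x. sc c x) = (\<lambda>x. sc (cnj c) x)"
  by (rule adj_unique) (simp add: ip_sc_left ip_sc_right)

lemma adj_id: "adj ip (\<lambda>x. x) = (\<lambda>x. x)"
  by (rule adj_unique) simp

lemma adj_zero: "adj ip (\<lambda>x. 0) = (\<lambda>x. 0)"
  by (rule adj_unique) simp

definition hsym :: "('h \<Rightarrow> 'h) \<Rightarrow> bool" where
  "hsym T \<longleftrightarrow> (\<forall>x y. ip (T x) y = ip x (T y))"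

lemma hsym_iff: "T \<in> bops sc ip \<Longrightarrow> adj ip T = T \<longleftrightarrow> hsym T"
  unfolding hsym_def by (metis adj_prop adj_unique)

lemma hsymD: "hsym T \<Longrightarrow> ip (T x) y = ip x (T y)" unfolding hsym_def by blast

lemma hsym_real: "hsym T \<Longrightarrow> ip (T x) x = complex_of_real (Re (ip (T x) x))"
proof -
  assume "hsym T"
  then have "ip (T x) x = cnj (ip (T x) x)" by (metis hsymD ip_sym)
  then show ?thesis by (metis Reals_cnj_iff complex_is_Real_iff of_real_Re)
qed

end


context hilb begin

lemma nm_le_0_iff[simp]: "nm x \<le> 0 \<longleftrightarrow> x = 0"
  using nm_nonneg[of x] nm_zero_iff[of x] by linarith

definition invert :: "('h \<Rightarrow> 'h) \<Rightarrow> bool" where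
  "invert T \<longleftrightarrow> (\<exists>S\<in>bops sc ip. (\<forall>x. S (T x) = x) \<and> (\<forall>x. T (S x) = x))"

lemma not_spec_iff: "l \<notin> op_spectrum sc ip T \<longleftrightarrow> invert (\<lambda>x. T x - sc l x)"
  unfolding op_spectrum_def invert_def by simp

lemma invert_comp:
  assumes "invert T" "invert S" shows "invert (T \<circ> S)"
proof -
  obtain T' where T': "T' \<in> bops sc ip" "\<And>x. T' (T x) = x" "\<And>x. T (T' x) = x"
    using assms(1) unfolding invert_def by blast
  obtain S' where S': "S' \<in> bops sc ip" "\<And>x. S' (S x) = x" "\<And>x. S (S' x) = x"
    using assms(2) unfolding invert_def by blast
  show ?thesis unfolding invert_def
    by (rule bexI[of _ "S' \<circ> T'"]) (auto simp: T' S' bops_comp)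
qed

lemma invert_sc: "c \<noteq> 0 \<Longrightarrow> invert (\<lambda>x. sc c x)"
  unfolding invert_def
  by (rule bexI[of _ "\<lambda>x. sc (1/c) x"]) (auto simp: sc_assoc bops_sc_id)

lemma invert_below:
  assumes "invert T" obtains C where "C > 0" "\<And>x. nm x \<le> C * nm (T x)"
proof -
  obtain S where S: "S \<in> bops sc ip" "\<And>x. S (T x) = x"
    using assms unfolding invert_def by blast
  have "nm x \<le> (opnorm ip S + 1) * nm (T x)" for x
    using opnorm_bound[OF S(1), of "T x"] S(2)[of x]
    by (smt (verit, ccfv_SIG) mult_right_mono nm_nonneg distrib_right mult_1)
  then show ?thesis using that[of "opnorm ip S + 1"] opnorm_nonneg[OF S(1)] by simp
qed

lemma invert_of_below:
  assumes T: "T \<in> bops sc ip" and c: "c > 0" and below: "\<And>x. c * nm x \<le> nm (T x)"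
    and inj: "\<And>y. adj ip T y = 0 \<Longrightarrow> y = 0"
  shows "invert T"
proof -
  have l: "lin T" using bops_lin[OF T] .
  have Tinj: "T x = T y \<Longrightarrow> x = y" for x y
  proof -
    assume "T x = T y"
    then have "T (x - y) = 0" by (simp add: lin_diff[OF l])
    then have "c * nm (x - y) \<le> 0" using below[of "x - y"] by simp
    then have "nm (x - y) \<le> 0" using c by (simp add: mult_le_0_iff)
    then have "nm (x - y) = 0" using nm_nonneg[of "x - y"] by linarith
    then show "x = y" by simp
  qed
  define R where "R = range T"
  have R: "csub R" unfolding csub_def R_def
  proof (intro conjI allI ballI impI)
    show "0 \<in> range T" using lin_zero[OF l] by (metis rangeI)
  next
    fix x y assume "x \<in> range T" "y \<in> range T"
    then show "x + y \<in> range T" by (auto simp: lin_add[OF l, symmetric])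
  next
    fix a x assume "x \<in> range T" then show "sc a x \<in> range T" by (auto simp: lin_sc[OF l, symmetric])
  next
    fix X L assume h: "(\<forall>n. X n \<in> range T) \<and> (\<lambda>n. nm (X n - L)) \<longlonglongrightarrow> 0"
    then obtain u where u: "\<And>n. X n = T (u n)" by (metis rangeE)
    have XL: "\<forall>e>0. \<exists>N. \<forall>n\<ge>N. nm (X n - L) < e"
      using h unfolding LIMSEQ_def by (simp add: dist_real_def)
    have "\<forall>e>0. \<exists>N. \<forall>m\<ge>N. \<forall>n\<ge>N. nm (u m - u n) < e"
    proof (intro allI impI)
      fix e :: real assume e: "e > 0"
      obtain N where N: "\<And>n. n \<ge> N \<Longrightarrow> nm (X n - L) < c * e / 2" using XL c e
        by (metis divide_pos_pos mult_pos_pos zero_less_numeral)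
      have "nm (u m - u n) < e" if "m \<ge> N" "n \<ge> N" for m n
      proof -
        have "c * nm (u m - u n) \<le> nm (X m - X n)" using below[of "u m - u n"] by (simp add: u lin_diff[OF l])
        also have "\<dots> \<le> nm (X m - L) + nm (L - X n)" by (rule nm_diff_triangle)
        also have "\<dots> < c * e" using N[OF that(1)] N[OF that(2)] by (simp add: nm_diff_commute[of L])
        finally show ?thesis using c by simp
      qed
      then show "\<exists>N. \<forall>m\<ge>N. \<forall>n\<ge>N. nm (u m - u n) < e" by blast
    qed
    then obtain U where U: "(\<lambda>n. nm (u n - U)) \<longlonglongrightarrow> 0" using complete by blast
    have "nm (T U - L) \<le> 0"
    proof (rule LIMSEQ_le_const)
      have "(\<lambda>n. opnorm ip T * nm (u n - U) + nm (X n - L)) \<longlonglongrightarrow> opnorm ip T * 0 + 0"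
        using U h by (intro tendsto_add tendsto_mult tendsto_const) auto
      then show "(\<lambda>n. opnorm ip T * nm (u n - U) + nm (X n - L)) \<longlonglongrightarrow> 0" by simp
      show "\<exists>N. \<forall>n\<ge>N. nm (T U - L) \<le> opnorm ip T * nm (u n - U) + nm (X n - L)"
      proof (intro exI allI impI)
        fix n
        have "nm (T U - L) \<le> nm (T U - X n) + nm (X n - L)" by (rule nm_diff_triangle)
        also have "nm (T U - X n) = nm (T (u n - U))" by (simp add: u lin_diff[OF l] nm_diff_commute)
        also have "\<dots> \<le> opnorm ip T * nm (u n - U)" by (rule opnorm_bound[OF T])
        finally show "nm (T U - L) \<le> opnorm ip T * nm (u n - U) + nm (X n - L)" by simp
      qed
    qed
    then have "T U = L" using nm_nonneg[of "T U - L"] by simp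
    then show "L \<in> range T" by blast
  qed
  have surj: "y \<in> range T" for y
  proof -
    obtain m where mR: "m \<in> R" and orth: "\<And>r. r \<in> R \<Longrightarrow> ip (y - m) r = 0"
      using proj_exists[OF R, of y] by blast
    have "ip x (adj ip T (y - m)) = 0" for x
      using orth[of "T x"] unfolding R_def by (metis adj_prop[OF T] complex_cnj_zero ip_sym rangeI)
    then have "adj ip T (y - m) = 0" using ip_self_zero by blast
    then have "y - m = 0" by (rule inj)
    then show ?thesis using mR unfolding R_def by simp
  qed
  define S where "S y = (SOME x. T x = y)" for y
  have TS: "T (S y) = y" for y unfolding S_def using surj[of y] by (metis (mono_tags) rangeE someI)
  have ST: "S (T x) = x" for x using TS[of "T x"] Tinj by blast
  have lS: "lin S" unfolding lin_def
  proof (intro conjI allI)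
    fix x y show "S (x + y) = S x + S y" by (rule Tinj) (simp add: TS lin_add[OF l])
  next
    fix a x show "S (sc a x) = sc a (S x)" by (rule Tinj) (simp add: TS lin_sc[OF l])
  qed
  have "nm (S y) \<le> (1 / c) * nm y" for y
    using below[of "S y"] c by (simp add: TS field_simps)
  then have "S \<in> bops sc ip" using lS by (rule bopsI[rotated])
  then show ?thesis unfolding invert_def using TS ST by blast
qed

lemma adj_minus_sc: "T \<in> bops sc ip \<Longrightarrow> adj ip (\<lambda>x. T x - sc l x) = (\<lambda>x. adj ip T x - sc (cnj l) x)"
  by (rule adj_unique) (simp add: ip_diff_left ip_diff_right ip_sc_left ip_sc_right adj_prop)

lemma bops_minus_sc: "T \<in> bops sc ip \<Longrightarrow> (\<lambda>x. T x - sc l x) \<in> bops sc ip"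
  using bops_diff(1)[OF _ bops_sc_id] by blast

lemma below_big:
  assumes T: "T \<in> bops sc ip"
  shows "(cmod l - opnorm ip T) * nm x \<le> nm (T x - sc l x)"
proof -
  have "nm (sc l x) - nm (T x) \<le> nm (sc l x - T x)" by (rule nm_rev_triangle)
  then have "cmod l * nm x - opnorm ip T * nm x \<le> nm (T x - sc l x)"
    using opnorm_bound[OF T, of x] by (simp add: nm_sc nm_diff_commute)
  then show ?thesis by (simp add: left_diff_distrib)
qed

lemma spec_bound:
  assumes T: "T \<in> bops sc ip" and l: "l \<in> op_spectrum sc ip T"
  shows "cmod l \<le> opnorm ip T"
proof (rule ccontr)
  assume "\<not> cmod l \<le> opnorm ip T"
  then have big: "cmod l - opnorm ip T > 0" by simp
  have A: "adj ip T \<in> bops sc ip" "opnorm ip (adj ip T) \<le> opnorm ip T" using adj_bops[OF T] by auto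
  have "invert (\<lambda>x. T x - sc l x)"
  proof (rule invert_of_below[OF bops_minus_sc[OF T] big below_big[OF T]])
    fix y assume "adj ip (\<lambda>x. T x - sc l x) y = 0"
    then have "adj ip T y - sc (cnj l) y = 0" using adj_minus_sc[OF T] by metis
    moreover have "(cmod (cnj l) - opnorm ip (adj ip T)) * nm y \<le> nm (adj ip T y - sc (cnj l) y)"
      by (rule below_big[OF A(1)])
    moreover have "cmod (cnj l) - opnorm ip (adj ip T) > 0" using big A(2) by simp
    ultimately show "y = 0" by (simp add: mult_le_0_iff)
  qed
  then show False using l not_spec_iff by blast
qed

lemma below_imag:
  assumes "hsym T"
  shows "\<bar>Im l\<bar> * nm x \<le> nm (T x - sc l x)"
proof -
  have "ip (T x - sc l x) x = complex_of_real (Re (ip (T x) x)) - l * complex_of_real (nm x ^ 2)"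
    using hsym_real[OF assms, of x] by (simp add: ip_diff_left ip_sc_left ip_self_nm)
  then have "Im (ip (T x - sc l x) x) = - Im l * nm x ^ 2" by simp
  then have "\<bar>Im l\<bar> * nm x ^ 2 \<le> cmod (ip (T x - sc l x) x)"
    by (metis abs_Im_le_cmod abs_minus_cancel abs_mult abs_of_nonneg mult_minus_left nm_nonneg zero_le_power)
  also have "\<dots> \<le> nm (T x - sc l x) * nm x" by (rule cauchy_schwarz)
  finally have "(\<bar>Im l\<bar> * nm x) * nm x \<le> nm (T x - sc l x) * nm x" by (simp add: power2_eq_square mult_ac)
  then show ?thesis
    by (cases "x = 0") (auto dest: nm_pos simp: mult_le_cancel_right)
qed

lemma spec_real:
  assumes T: "T \<in> bops sc ip" and s: "hsym T" and l: "l \<in> op_spectrum sc ip T"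
  shows "Im l = 0"
proof (rule ccontr)
  assume "Im l \<noteq> 0"
  then have im: "\<bar>Im l\<bar> > 0" by simp
  have aT: "adj ip T = T" using hsym_iff[OF T] s by simp
  have "invert (\<lambda>x. T x - sc l x)"
  proof (rule invert_of_below[OF bops_minus_sc[OF T] im below_imag[OF s]])
    fix y assume "adj ip (\<lambda>x. T x - sc l x) y = 0"
    then have "T y - sc (cnj l) y = 0" using adj_minus_sc[OF T] aT by metis
    moreover have "\<bar>Im (cnj l)\<bar> * nm y \<le> nm (T y - sc (cnj l) y)" by (rule below_imag[OF s])
    ultimately show "y = 0" using im by (simp add: mult_le_0_iff)
  qed
  then show False using l not_spec_iff by blast
qed

end


context hilb begin

lemma norm_in_spec:
  assumes T: "T \<in> bops sc ip" and s: "hsym T" and nz: "T \<noteq> (\<lambda>x. 0)"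
  shows "complex_of_real (opnorm ip T) \<in> op_spectrum sc ip T \<or>
         complex_of_real (- opnorm ip T) \<in> op_spectrum sc ip T"
proof (rule ccontr)
  define b where "b = opnorm ip T"
  have b: "b > 0" using opnorm_nonneg[OF T] opnorm_zero_iff[OF T] nz unfolding b_def by fastforce
  assume "\<not> ?thesis"
  then have i1: "invert (\<lambda>x. T x - sc (complex_of_real b) x)"
    and i2: "invert (\<lambda>x. T x - sc (complex_of_real (- b)) x)"
    using not_spec_iff unfolding b_def by blast+
  define P where "P = (\<lambda>x. T x - sc (complex_of_real b) x) \<circ> (\<lambda>x. T x - sc (complex_of_real (- b)) x)"
  have iP: "invert P" unfolding P_def by (rule invert_comp[OF i1 i2])
  obtain C where C: "C > 0" "\<And>x. nm x \<le> C * nm (P x)" using invert_below[OF iP] by blast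
  have l: "lin T" by (rule bops_lin[OF T])
  have Pform: "P x = T (T x) - sc (complex_of_real (b^2)) x" for x
    unfolding P_def
    by (simp add: lin_add[OF l] lin_diff[OF l] lin_sc[OF l] sc_add_right sc_diff_right sc_assoc sc_minus_left power2_eq_square)
  have Pbound: "nm (P x) ^ 2 \<le> 2 * b^2 * (b^2 - nm (T x) ^ 2)" if x1: "nm x \<le> 1" for x
  proof -
    have ipT: "ip (T (T x)) x = complex_of_real (nm (T x) ^ 2)"
      using hsymD[OF s, of "T x" x] by (simp add: ip_sym[of "T x"] ip_self_nm)
    have "nm (P x) ^ 2 = nm (T (T x)) ^ 2 - 2 * Re (ip (T (T x)) (sc (complex_of_real (b^2)) x))
          + nm (sc (complex_of_real (b^2)) x) ^ 2" unfolding Pform by (rule nm_diff_sq)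
    also have "\<dots> = nm (T (T x)) ^ 2 - 2 * b^2 * nm (T x) ^ 2 + b^4 * nm x ^ 2"
    proof -
      have cb: "cmod ((complex_of_real b)^2) = b^2" using b by (simp add: norm_power)
      show ?thesis by (simp add: ip_sc_right ipT nm_sc power_mult_distrib cb)
    qed
    also have "\<dots> \<le> b^4 - 2 * b^2 * nm (T x) ^ 2 + b^4"
    proof -
      have "nm (T (T x)) \<le> b * nm (T x)" using opnorm_bound[OF T] unfolding b_def by blast
      also have "\<dots> \<le> b * (b * nm x)" using opnorm_bound[OF T, of x] b unfolding b_def by simp
      also have "\<dots> \<le> b * b" using x1 b by (simp add: mult_left_le)
      finally have "nm (T (T x)) ^ 2 \<le> (b * b) ^ 2" by (simp add: power_mono)
      moreover have "nm x ^ 2 \<le> 1" using x1 by (simp add: power_le_one)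
      then have "b^4 * nm x ^ 2 \<le> b^4" using b by (simp add: mult_left_le)
      ultimately show ?thesis by (simp add: power2_eq_square power4_eq_xxxx mult_ac)
    qed
    also have "\<dots> = 2 * b^2 * (b^2 - nm (T x) ^ 2)" by (simp add: power2_eq_square power4_eq_xxxx algebra_simps)
    finally show ?thesis .
  qed
  define e where "e = min (b/2) (1 / (16 * C^2 * b^3))"
  have e: "e > 0" "e \<le> b/2" "e \<le> 1 / (16 * C^2 * b^3)" using b C unfolding e_def by auto
  obtain x where x1: "nm x \<le> 1" and xt: "nm (T x) > b - e"
    using opnorm_approx[OF T e(1)] unfolding b_def by blast
  define t where "t = nm (T x)"
  have tb: "t \<le> b" using opnorm_bound[OF T, of x] x1 b unfolding t_def b_def
    by (smt (verit) mult_left_le nm_nonneg)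
  have tb2: "t \<ge> b / 2" using xt e unfolding t_def by linarith
  have "t \<le> b * nm x" using opnorm_bound[OF T, of x] unfolding t_def b_def .
  then have "b / 2 \<le> b * nm x" using tb2 by linarith
  then have xh: "1/2 \<le> nm x" using b by (simp add: field_simps)
  have "(1/2::real)^2 \<le> nm x ^ 2" by (rule power_mono[OF xh]) auto
  then have xs: "1/4 \<le> nm x ^ 2" by (simp add: power_divide)
  have d1: "b^2 - t^2 < 2 * b * e"
  proof -
    have "b^2 - t^2 = (b - t) * (b + t)" by (simp add: power2_eq_square algebra_simps)
    also have "\<dots> \<le> (b - t) * (2 * b)" using tb by (intro mult_left_mono) auto
    also have "\<dots> < e * (2 * b)" using xt b unfolding t_def by (intro mult_strict_right_mono) auto
    finally show ?thesis by (simp add: mult_ac)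
  qed
  have "nm x ^ 2 \<le> (C * nm (P x)) ^ 2" using C(2)[of x] by (simp add: power_mono)
  also have "\<dots> = C^2 * nm (P x) ^ 2" by (simp add: power_mult_distrib)
  also have "\<dots> \<le> C^2 * (2 * b^2 * (b^2 - t^2))" using Pbound[OF x1] C unfolding t_def by (simp add: mult_left_mono)
  also have "\<dots> < C^2 * (2 * b^2 * (2 * b * e))" using d1 b C by (intro mult_strict_left_mono) auto
  also have "\<dots> = 4 * (C^2 * b^3) * e" by (simp add: power2_eq_square power3_eq_cube mult_ac)
  also have "\<dots> \<le> 4 * (C^2 * b^3) * (1 / (16 * C^2 * b^3))" using e b C by (intro mult_left_mono) auto
  also have "\<dots> = 1/4" using b C by simp
  finally show False using xs by simp
qed

end


context hilb begin

definition peval :: "complex poly \<Rightarrow> ('h \<Rightarrow> 'h) \<Rightarrow> ('h \<Rightarrow> 'h)" where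
  "peval p T = (\<lambda>x. \<Sum>k<Suc (degree p). sc (coeff p k) ((T ^^ k) x))"

lemma peval_upto: assumes "degree p < n" shows "peval p T x = (\<Sum>k<n. sc (coeff p k) ((T ^^ k) x))"
proof -
  have "(\<Sum>k<n. sc (coeff p k) ((T ^^ k) x)) = (\<Sum>k<Suc (degree p). sc (coeff p k) ((T ^^ k) x))"
  proof (rule sum.mono_neutral_right)
    show "\<forall>i\<in>{..<n} - {..<Suc (degree p)}. sc (coeff p i) ((T ^^ i) x) = 0"
      by (auto simp: coeff_eq_0)
  qed (use assms in auto)
  then show ?thesis unfolding peval_def by simp
qed

lemma peval_0[simp]: "peval 0 T = (\<lambda>x. 0)"
  unfolding peval_def by simp

lemma peval_pCons: assumes l: "lin T" shows "peval (pCons a p) T = (\<lambda>x. sc a x + T (peval p T x))"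
proof
  fix x
  define n where "n = Suc (degree p)"
  have d: "degree (pCons a p) < Suc n" using degree_pCons_le[of a p] unfolding n_def by simp
  have "peval (pCons a p) T x = (\<Sum>k<Suc n. sc (coeff (pCons a p) k) ((T ^^ k) x))" by (rule peval_upto[OF d])
  also have "\<dots> = sc a x + (\<Sum>k<n. sc (coeff p k) ((T ^^ Suc k) x))"
    by (subst sum.lessThan_Suc_shift) simp
  also have "(\<Sum>k<n. sc (coeff p k) ((T ^^ Suc k) x)) = T (\<Sum>k<n. sc (coeff p k) ((T ^^ k) x))"
    by (simp add: lin_sum[OF l] lin_sc[OF l])
  also have "(\<Sum>k<n. sc (coeff p k) ((T ^^ k) x)) = peval p T x" unfolding peval_def n_def ..
  finally show "peval (pCons a p) T x = sc a x + T (peval p T x)" .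
qed

lemma peval_add: "peval (p + q) T x = peval p T x + peval q T x"
proof -
  define n where "n = Suc (max (degree p) (degree q))"
  have "degree (p + q) < n" "degree p < n" "degree q < n"
    unfolding n_def using degree_add_le_max[of p q] by auto
  then show ?thesis by (simp add: peval_upto coeff_add sc_add_left sum.distrib)
qed

lemma peval_smult: "peval (smult c p) T x = sc c (peval p T x)"
proof -
  define n where "n = Suc (degree p)"
  have "degree (smult c p) < n" "degree p < n" unfolding n_def by auto
  then show ?thesis by (simp add: peval_upto sc_sum_right sc_assoc)
qed

lemma peval_const: "peval [:c:] T = (\<lambda>x. sc c x)"
  unfolding peval_def by simp

lemma peval_lin: "lin T \<Longrightarrow> lin (peval p T)"
proof (induction p)
  case 0 then show ?case by (simp add: lin_0)
next
  case (pCons a p)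
  then show ?case unfolding peval_pCons[OF pCons.prems]
    by (intro lin_plus lin_sc_id) (auto simp: lin_comp[unfolded comp_def])
qed

lemma peval_bops: "T \<in> bops sc ip \<Longrightarrow> peval p T \<in> bops sc ip"
proof (induction p)
  case 0 then show ?case by (simp add: bops_zero)
next
  case (pCons a p)
  then show ?case unfolding peval_pCons[OF bops_lin[OF pCons.prems]]
    using bops_plus(1)[OF bops_sc_id bops_comp(1)[OF pCons.prems pCons.IH[OF pCons.prems]]]
    by (simp add: comp_def)
qed

lemma peval_mult: assumes l: "lin T" shows "peval (p * q) T x = peval p T (peval q T x)"
proof (induction p arbitrary: x)
  case 0 then show ?case by simp
next
  case (pCons a p)
  have "peval (pCons a p * q) T x = peval (smult a q) T x + peval (pCons 0 (p * q)) T x"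
    by (simp add: peval_add)
  also have "\<dots> = sc a (peval q T x) + T (peval p T (peval q T x))"
    by (simp add: peval_smult peval_pCons[OF l] pCons.IH)
  also have "\<dots> = peval (pCons a p) T (peval q T x)" by (simp add: peval_pCons[OF l])
  finally show ?case .
qed

lemma peval_X: "lin T \<Longrightarrow> peval [:-z, 1:] T = (\<lambda>x. T x - sc z x)"
  by (simp add: peval_pCons lin_zero sc_minus_left)

lemma peval_commute:
  assumes l: "lin T" and lS: "lin S" and c: "\<And>x. S (T x) = T (S x)"
  shows "S (peval p T x) = peval p T (S x)"
proof (induction p arbitrary: x)
  case 0 then show ?case by (simp add: lin_zero[OF lS])
next
  case (pCons a p)
  then show ?case by (simp add: peval_pCons[OF l] lin_add[OF lS] lin_sc[OF lS] c)
qed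

definition rcoeffs :: "complex poly \<Rightarrow> bool" where
  "rcoeffs p \<longleftrightarrow> (\<forall>k. coeff p k \<in> \<real>)"

lemma peval_hsym:
  assumes T: "T \<in> bops sc ip" and s: "hsym T" and r: "rcoeffs p"
  shows "hsym (peval p T)"
  using r
proof (induction p)
  case 0 then show ?case by (simp add: hsym_def)
next
  case (pCons a p)
  have l: "lin T" by (rule bops_lin[OF T])
  have ra: "a \<in> \<real>" using pCons.prems unfolding rcoeffs_def by (metis coeff_pCons_0)
  have rp: "rcoeffs p" using pCons.prems unfolding rcoeffs_def by (metis coeff_pCons_Suc)
  have hp: "hsym (peval p T)" using pCons.IH[OF rp] .
  have com: "T (peval p T y) = peval p T (T y)" for y
    by (rule peval_commute[OF l l]) simp
  show ?case unfolding hsym_def peval_pCons[OF l]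
  proof (intro allI)
    fix x y
    have "ip (sc a x + T (peval p T x)) y = a * ip x y + ip x (peval p T (T y))"
      by (simp add: ip_add_left ip_sc_left hsymD[OF s] hsymD[OF hp])
    also have "\<dots> = ip x (sc a y + T (peval p T y))"
      using ra by (simp add: ip_add_right ip_sc_right com Reals_cnj_iff)
    finally show "ip (sc a x + T (peval p T x)) y = ip x (sc a y + T (peval p T y))" .
  qed
qed

lemma peval_invert:
  assumes T: "T \<in> bops sc ip" and p: "p \<noteq> 0"
    and roots: "\<And>z. poly p z = 0 \<Longrightarrow> invert (\<lambda>x. T x - sc z x)"
  shows "invert (peval p T)"
  using p roots
proof (induction "degree p" arbitrary: p rule: less_induct)
  case less
  have l: "lin T" by (rule bops_lin[OF T])
  show ?case
  proof (cases "degree p = 0")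
    case True
    then obtain c where pc: "p = [:c:]" by (metis degree_eq_zeroE)
    then have "c \<noteq> 0" using less.prems by simp
    then show ?thesis unfolding pc peval_const by (rule invert_sc)
  next
    case False
    then have "\<not> constant (poly p)" by (simp add: constant_degree)
    then obtain z where z: "poly p z = 0" using fundamental_theorem_of_algebra by blast
    then obtain q where pq: "p = [:-z, 1:] * q" using poly_eq_0_iff_dvd by (metis dvdE)
    have q0: "q \<noteq> 0" using less.prems(1) pq by auto
    have "degree p = degree [:-z, 1:] + degree q" unfolding pq by (rule degree_mult_eq) (use q0 in auto)
    then have dq: "degree q < degree p" by simp
    have iq: "invert (peval q T)"
    proof (rule less.hyps[OF dq q0])
      fix w assume "poly q w = 0"
      then have "poly p w = 0" using pq by simp
      then show "invert (\<lambda>x. T x - sc w x)" by (rule less.prems(2))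
    qed
    have "peval p T = peval [:-z, 1:] T \<circ> peval q T"
      unfolding pq comp_def by (rule ext) (rule peval_mult[OF l])
    also have "peval [:-z, 1:] T = (\<lambda>x. T x - sc z x)" by (rule peval_X[OF l])
    finally show ?thesis using invert_comp[OF less.prems(2)[OF z] iq] by (simp only:)
  qed
qed

end


definition rpoly :: "complex poly \<Rightarrow> bool" where
  "rpoly p \<longleftrightarrow> (\<forall>k. coeff p k \<in> \<real>)"

lemma rpoly_add: "rpoly p \<Longrightarrow> rpoly q \<Longrightarrow> rpoly (p + q)"
  unfolding rpoly_def by (simp add: Reals_add)

lemma rpoly_diff: "rpoly p \<Longrightarrow> rpoly q \<Longrightarrow> rpoly (p - q)"
  unfolding rpoly_def by (simp add: Reals_diff)

lemma rpoly_mult: "rpoly p \<Longrightarrow> rpoly q \<Longrightarrow> rpoly (p * q)"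
  unfolding rpoly_def by (simp add: coeff_mult Reals_mult sum_in_Reals)

lemma rpoly_smult: "c \<in> \<real> \<Longrightarrow> rpoly p \<Longrightarrow> rpoly (smult c p)"
  unfolding rpoly_def by (simp add: Reals_mult)

lemma rpoly_pCons: "rpoly (pCons a p) \<longleftrightarrow> a \<in> \<real> \<and> rpoly p"
  unfolding rpoly_def by (metis coeff_pCons_0 coeff_pCons_Suc not0_implies_Suc)

lemma rpoly_0[simp]: "rpoly 0" unfolding rpoly_def by simp

lemma rpoly_const: "c \<in> \<real> \<Longrightarrow> rpoly [:c:]" by (simp add: rpoly_pCons)
lemma rpoly_1[simp]: "rpoly 1" unfolding one_pCons by (simp add: rpoly_pCons)

lemma rpoly_lin: "s \<in> \<real> \<Longrightarrow> rpoly [:-s, 1:]" by (simp add: rpoly_pCons)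

lemma rpoly_prod: "(\<And>i. i \<in> S \<Longrightarrow> rpoly (f i)) \<Longrightarrow> rpoly (\<Prod>i\<in>S. f i)"
proof (induction S rule: infinite_finite_induct)
  case (infinite S) then show ?case by simp
next
  case empty then show ?case by simp
next
  case (insert x F) then show ?case by (simp add: rpoly_mult)
qed

lemma rpoly_poly: "rpoly p \<Longrightarrow> x \<in> \<real> \<Longrightarrow> poly p x \<in> \<real>"
  by (induction p) (auto simp: rpoly_pCons Reals_add Reals_mult)

lemma vanish_dvd:
  fixes P :: "complex poly"
  assumes "finite S" "\<And>s. s \<in> S \<Longrightarrow> poly P s = 0"
  shows "(\<Prod>s\<in>S. [:-s, 1:]) dvd P"
  using assms
proof (induction S arbitrary: P rule: finite_induct)
  case empty then show ?case by simp
next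
  case (insert s F)
  have "poly P s = 0" using insert.prems by simp
  then have "[:-s, 1:] dvd P" by (simp only: poly_eq_0_iff_dvd)
  then obtain Q where PQ: "P = [:-s, 1:] * Q" by (rule dvdE)
  have "poly Q t = 0" if "t \<in> F" for t
  proof -
    have "poly P t = 0" using insert.prems that by simp
    moreover have "t \<noteq> s" using that insert.hyps by auto
    ultimately show ?thesis using PQ by simp
  qed
  then have "(\<Prod>s\<in>F. [:-s, 1:]) dvd Q" using insert.IH by blast
  then have "[:-s, 1:] * (\<Prod>s\<in>F. [:-s, 1:]) dvd [:-s, 1:] * Q" by (rule mult_dvd_mono[OF dvd_refl])
  moreover have "(\<Prod>s\<in>insert s F. [:-s, 1:]) = [:-s, 1:] * (\<Prod>s\<in>F. [:-s, 1:])"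
    by (rule prod.insert[OF insert.hyps(1,2)])
  ultimately show ?case unfolding PQ by simp
qed

lemma interp:
  fixes v :: "complex \<Rightarrow> complex"
  assumes "finite S" "S \<subseteq> \<real>" "\<And>s. s \<in> S \<Longrightarrow> v s \<in> \<real>"
  shows "\<exists>P. rpoly P \<and> (\<forall>s\<in>S. poly P s = v s)"
  using assms
proof (induction S rule: finite_induct)
  case empty then show ?case by (intro exI[of _ 0]) simp
next
  case (insert s F)
  then obtain P where P: "rpoly P" "\<And>t. t \<in> F \<Longrightarrow> poly P t = v t" by auto
  define m where "m = (\<Prod>t\<in>F. [:-t, 1:])"
  have rm: "rpoly m" unfolding m_def using insert.prems by (intro rpoly_prod rpoly_lin) auto
  have m0: "poly m t = 0" if "t \<in> F" for t
    unfolding m_def poly_prod using that insert.hyps(1) by (intro prod_zero) auto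
  have ms: "poly m s \<noteq> 0" unfolding m_def poly_prod using insert.hyps by auto
  define c where "c = (v s - poly P s) / poly m s"
  have sR: "s \<in> \<real>" using insert.prems by auto
  have cR: "c \<in> \<real>" unfolding c_def
    using insert.prems(2) rpoly_poly[OF P(1) sR] rpoly_poly[OF rm sR] by (auto intro!: Reals_divide Reals_diff)
  define P' where "P' = P + smult c m"
  have "rpoly P'" unfolding P'_def using P(1) rm cR by (simp add: rpoly_add rpoly_smult)
  moreover have "poly P' t = v t" if "t \<in> insert s F" for t
  proof (cases "t = s")
    case True then show ?thesis unfolding P'_def c_def using ms by simp
  next
    case False then have "t \<in> F" using that by auto
    then show ?thesis unfolding P'_def using P(2) m0 by simp
  qed
  ultimately show ?case by blast
qed


lemma le_eps_mult:
  fixes r K :: real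
  assumes K: "K \<ge> 0" and h: "\<And>e. e > 0 \<Longrightarrow> r \<le> e * K"
  shows "r \<le> 0"
proof (rule field_le_epsilon)
  fix e :: real assume e: "e > 0"
  have "r \<le> (e / (K + 1)) * K" using h[of "e / (K + 1)"] e K by simp
  also have "\<dots> \<le> e" using e K by (simp add: field_simps)
  finally show "r \<le> 0 + e" by simp
qed

context hilb begin

lemma rcoeffs_rpoly: "rcoeffs p \<longleftrightarrow> rpoly p" unfolding rcoeffs_def rpoly_def ..

lemma peval_diff: "peval (p - q) T x = peval p T x - peval q T x"
proof -
  define n where "n = Suc (max (degree p) (degree q))"
  have "degree (p - q) < n" "degree p < n" "degree q < n"
    unfolding n_def using degree_diff_le_max[of p q] by auto
  then show ?thesis by (simp add: peval_upto sc_diff_left sum_subtractf)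
qed

lemma peval_one: "peval 1 T x = x"
  unfolding one_pCons peval_const by simp

context
  fixes A assumes SA: "star_subalgebra sc ip A"
begin

lemma ss_bops: "a \<in> A \<Longrightarrow> a \<in> bops sc ip" using SA unfolding star_subalgebra_def by blast
lemma ss_zero: "(\<lambda>x. 0) \<in> A" using SA unfolding star_subalgebra_def by blast
lemma ss_plus: "a \<in> A \<Longrightarrow> b \<in> A \<Longrightarrow> (\<lambda>x. a x + b x) \<in> A" using SA unfolding star_subalgebra_def by blast
lemma ss_scale: "a \<in> A \<Longrightarrow> (\<lambda>x. sc c (a x)) \<in> A" using SA unfolding star_subalgebra_def by blast
lemma ss_comp: "a \<in> A \<Longrightarrow> b \<in> A \<Longrightarrow> a \<circ> b \<in> A" using SA unfolding star_subalgebra_def by blast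
lemma ss_adj: "a \<in> A \<Longrightarrow> adj ip a \<in> A" using SA unfolding star_subalgebra_def by blast

lemma ss_in_closure: "a \<in> A \<Longrightarrow> a \<in> norm_closure sc ip A"
  unfolding norm_closure_def
proof (intro CollectI conjI allI impI)
  fix e :: real assume a: "a \<in> A" and e: "e > 0"
  have "opnorm ip (\<lambda>x. a x - a x) = 0" using opnorm_zero_iff[OF bops_zero] by simp
  then show "\<exists>a'\<in>A. opnorm ip (\<lambda>x. a x - a' x) < e" using a e by (intro bexI[of _ a]) auto
qed (rule ss_bops)

lemma closure_bops: "T \<in> norm_closure sc ip A \<Longrightarrow> T \<in> bops sc ip"
  unfolding norm_closure_def by blast

lemma closure_approx: "T \<in> norm_closure sc ip A \<Longrightarrow> e > 0 \<Longrightarrow> \<exists>a\<in>A. opnorm ip (\<lambda>x. T x - a x) < e"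
  unfolding norm_closure_def by blast

lemma comp_peval_in: assumes b: "b \<in> A" shows "b \<circ> peval p b \<in> A"
proof (induction p)
  case 0
  have "b \<circ> peval 0 b = (\<lambda>x. 0)" using lin_zero[OF bops_lin[OF ss_bops[OF b]]] by (simp add: comp_def)
  then show ?case using ss_zero by simp
next
  case (pCons a p)
  have l: "lin b" by (rule bops_lin[OF ss_bops[OF b]])
  have "b \<circ> peval (pCons a p) b = (\<lambda>x. sc a (b x) + (b \<circ> (b \<circ> peval p b)) x)"
    by (simp add: peval_pCons[OF l] lin_add[OF l] lin_sc[OF l] comp_def)
  moreover have "(\<lambda>x. sc a (b x) + (b \<circ> (b \<circ> peval p b)) x) \<in> A"
    by (rule ss_plus[OF ss_scale[OF b] ss_comp[OF b pCons.IH]])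
  ultimately show ?case by simp
qed

lemma peval_in: assumes b: "b \<in> A" and c0: "coeff p 0 = 0" shows "peval p b \<in> A"
proof -
  obtain a p' where pp: "p = pCons a p'" by (cases p) auto
  then have a0: "a = 0" using c0 by simp
  have l: "lin b" by (rule bops_lin[OF ss_bops[OF b]])
  have "peval p b = b \<circ> peval p' b" unfolding pp a0 by (simp add: peval_pCons[OF l] comp_def)
  then show ?thesis using comp_peval_in[OF b] by simp
qed

lemma closure_commute:
  assumes CA: "commutative_ops A" and T: "T \<in> norm_closure sc ip A" and c: "c \<in> A"
  shows "T (c x) = c (T x)"
proof -
  have Tb: "T \<in> bops sc ip" by (rule closure_bops[OF T])
  have cb: "c \<in> bops sc ip" by (rule ss_bops[OF c])
  have lc: "lin c" by (rule bops_lin[OF cb])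
  have "nm (T (c x) - c (T x)) \<le> 0"
  proof (rule le_eps_mult[of "2 * opnorm ip c * nm x"])
    show "0 \<le> 2 * opnorm ip c * nm x" using opnorm_nonneg[OF cb] by simp
  next
    fix e :: real assume e: "e > 0"
    obtain a where a: "a \<in> A" and ae: "opnorm ip (\<lambda>x. T x - a x) < e" using closure_approx[OF T e] by blast
    define D where "D = (\<lambda>x. T x - a x)"
    have Db: "D \<in> bops sc ip" unfolding D_def by (rule bops_diff(1)[OF Tb ss_bops[OF a]])
    have ac: "a (c y) = c (a y)" for y using CA a c unfolding commutative_ops_def by (metis comp_apply)
    have "T (c x) - c (T x) = D (c x) - c (D x)"
      unfolding D_def by (simp add: lin_diff[OF lc] ac)
    then have "nm (T (c x) - c (T x)) \<le> nm (D (c x)) + nm (c (D x))" by (simp add: nm_diff_le)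
    also have "\<dots> \<le> opnorm ip D * nm (c x) + opnorm ip c * nm (D x)"
      by (intro add_mono opnorm_bound Db cb)
    also have "\<dots> \<le> e * (opnorm ip c * nm x) + opnorm ip c * (e * nm x)"
    proof (intro add_mono mult_mono)
      show "opnorm ip D \<le> e" using ae unfolding D_def by simp
      show "nm (c x) \<le> opnorm ip c * nm x" by (rule opnorm_bound[OF cb])
      show "nm (D x) \<le> e * nm x"
        using opnorm_bound[OF Db, of x] ae unfolding D_def by (smt (verit) mult_right_mono nm_nonneg)
    qed (use e opnorm_nonneg[OF cb] opnorm_nonneg[OF Db] in auto)
    also have "\<dots> = e * (2 * opnorm ip c * nm x)" by (simp add: algebra_simps)
    finally show "nm (T (c x) - c (T x)) \<le> e * (2 * opnorm ip c * nm x)" .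
  qed
  then show ?thesis by simp
qed

end

end


context hilb begin

lemma real_of_Re: "s \<in> \<real> \<Longrightarrow> s = complex_of_real (Re s)"
  by (simp add: complex_is_Real_iff complex_eq_iff)

lemma sqrt_sq_c: "x \<ge> 0 \<Longrightarrow> (complex_of_real (sqrt x))^2 = complex_of_real x"
  by (metis of_real_power real_sqrt_pow2)

lemma sa_minpoly:
  assumes b: "b \<in> bops sc ip" and hb: "hsym b" and fin: "finite (op_spectrum sc ip b)"
  defines "S \<equiv> insert 0 (op_spectrum sc ip b)"
  defines "m \<equiv> (\<Prod>s\<in>S. [:-s, 1:])"
  shows "peval m b = (\<lambda>x. 0)"
proof (rule ccontr)
  assume nz: "peval m b \<noteq> (\<lambda>x. 0)"
  have SR: "S \<subseteq> \<real>" unfolding S_def using spec_real[OF b hb] by (auto simp: complex_is_Real_iff)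
  have finS: "finite S" unfolding S_def using fin by simp
  have mroot: "poly m s = 0" if "s \<in> S" for s
  proof -
    have "poly m s = (\<Prod>t\<in>S. poly [:-t, 1:] s)" unfolding m_def by (rule poly_prod)
    also have "\<dots> = 0" using finS that by (intro prod_zero) auto
    finally show ?thesis .
  qed
  have rm: "rpoly m" unfolding m_def using SR by (intro rpoly_prod rpoly_lin) auto
  define n where "n = peval m b"
  have nb: "n \<in> bops sc ip" unfolding n_def by (rule peval_bops[OF b])
  have hn: "hsym n" unfolding n_def using peval_hsym[OF b hb] rm by (simp add: rcoeffs_rpoly)
  have notin: "complex_of_real mu \<notin> op_spectrum sc ip n" if mu: "mu \<noteq> 0" for mu
  proof -
    define Q where "Q = m - [:complex_of_real mu:]"
    have "poly Q 0 = - complex_of_real mu" unfolding Q_def using mroot[of 0] by (simp add: S_def)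
    then have Q0: "Q \<noteq> 0" using mu by auto
    have "invert (peval Q b)"
    proof (rule peval_invert[OF b Q0])
      fix z assume "poly Q z = 0"
      then have pm: "poly m z = complex_of_real mu" unfolding Q_def by simp
      have "z \<notin> S"
      proof
        assume "z \<in> S"
        then have "poly m z = 0" by (rule mroot)
        then show False using pm mu by simp
      qed
      then have "z \<notin> op_spectrum sc ip b" unfolding S_def by simp
      then show "invert (\<lambda>x. b x - sc z x)" using not_spec_iff by blast
    qed
    moreover have "peval Q b = (\<lambda>x. n x - sc (complex_of_real mu) x)"
      unfolding Q_def n_def by (rule ext) (simp add: peval_diff peval_const)
    ultimately show ?thesis using not_spec_iff by simp
  qed
  have "n \<noteq> (\<lambda>x. 0)" using nz unfolding n_def .
  then have "opnorm ip n \<noteq> 0" using opnorm_zero_iff[OF nb] by simp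
  then show False using norm_in_spec[OF nb hn \<open>n \<noteq> (\<lambda>x. 0)\<close>] notin[of "opnorm ip n"] notin[of "- opnorm ip n"]
    by auto
qed


lemma sc_half: "sc (1/2) (y + y) = y"
  using sc_two[of y] sc_assoc[of "1/2" 2 y] by simp

lemma Re_ip_sc_self: "Re (ip (sc (complex_of_real r) z) z) = r * nm z ^ 2"
  by (simp add: ip_sc_left ip_self_nm)

lemma Re_ip_bound: "\<bar>Re (ip u z)\<bar> \<le> nm u * nm z"
  using cauchy_schwarz[of u z] abs_Re_le_cmod order_trans by blast

lemma proj_in_A:
  assumes RA: "R_star_algebra sc ip A" and CA: "commutative_ops A"
    and pc: "pr \<in> norm_closure sc ip A" and idem: "pr \<circ> pr = pr" and sa: "adj ip pr = pr"
  shows "pr \<in> A"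
proof -
  have SA: "star_subalgebra sc ip A" using RA unfolding R_star_algebra_def by blast
  have finspec: "finite (op_spectrum sc ip c)" if "c \<in> A" "adj ip c = c" for c
    using RA that unfolding R_star_algebra_def by blast
  have prb: "pr \<in> bops sc ip" by (rule closure_bops[OF SA pc])
  have lpr: "lin pr" by (rule bops_lin[OF prb])
  have pp: "pr (pr x) = pr x" for x using fun_cong[OF idem, of x] by simp
  obtain a where aA: "a \<in> A" and ae: "opnorm ip (\<lambda>x. pr x - a x) < 1/8"
    using closure_approx[OF SA pc, of "1/8"] by auto
  have ab: "a \<in> bops sc ip" by (rule ss_bops[OF SA aA])
  have aaA: "adj ip a \<in> A" by (rule ss_adj[OF SA aA])
  have aab: "adj ip a \<in> bops sc ip" by (rule ss_bops[OF SA aaA])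
  define b where "b = (\<lambda>x. sc (1/2) (a x + adj ip a x))"
  have bA: "b \<in> A" unfolding b_def by (rule ss_scale[OF SA ss_plus[OF SA aA aaA]])
  have bb: "b \<in> bops sc ip" by (rule ss_bops[OF SA bA])
  have lb: "lin b" by (rule bops_lin[OF bb])
  have adjb: "adj ip b = b"
  proof -
    have "adj ip b = (\<lambda>x. sc (cnj (1/2)) (adj ip (\<lambda>x. a x + adj ip a x) x))"
      unfolding b_def by (rule adj_scale[OF bops_plus(1)[OF ab aab]])
    also have "adj ip (\<lambda>x. a x + adj ip a x) = (\<lambda>x. adj ip a x + adj ip (adj ip a) x)"
      by (rule adj_plus[OF ab aab])
    also have "adj ip (adj ip a) = a" by (rule adj_adj[OF ab])
    finally show ?thesis unfolding b_def by (simp add: add.commute)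
  qed
  have hb: "hsym b" using hsym_iff[OF bb] adjb by simp
  define D where "D = (\<lambda>x. a x - pr x)"
  have Db: "D \<in> bops sc ip" unfolding D_def by (rule bops_diff(1)[OF ab prb])
  have adjD: "adj ip D = (\<lambda>x. adj ip a x - pr x)" unfolding D_def using adj_diff[OF ab prb] sa by simp
  have bpr: "(\<lambda>x. b x - pr x) = (\<lambda>x. sc (1/2) (D x + adj ip D x))"
  proof
    fix x
    have "sc (1/2) (D x + adj ip D x) = sc (1/2) ((a x + adj ip a x) - (pr x + pr x))"
      unfolding adjD unfolding D_def by (simp add: algebra_simps)
    also have "\<dots> = b x - pr x" unfolding b_def by (simp add: sc_diff_right sc_half)
    finally show "b x - pr x = sc (1/2) (D x + adj ip D x)" by simp
  qed
  define del where "del = opnorm ip (\<lambda>x. b x - pr x)"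
  have del: "del < 1/2"
  proof -
    have "del \<le> cmod (1/2) * opnorm ip (\<lambda>x. D x + adj ip D x)"
      unfolding del_def bpr by (rule bops_scale(2)[OF bops_plus(1)[OF Db adj_bops(1)[OF Db]]])
    also have "\<dots> \<le> (1/2) * (opnorm ip D + opnorm ip (adj ip D))"
      using bops_plus(2)[OF Db adj_bops(1)[OF Db]] by simp
    also have "\<dots> \<le> (1/2) * (opnorm ip D + opnorm ip D)"
      using adj_bops(2)[OF Db] by simp
    also have "opnorm ip D = opnorm ip (\<lambda>x. pr x - a x)" unfolding D_def by (rule opnorm_diff_commute[OF ab prb])
    finally show ?thesis using ae by simp
  qed
  have delb: "\<bar>Re (ip (b z - pr z) z)\<bar> \<le> del * nm z ^ 2" for z
  proof -
    have "\<bar>Re (ip (b z - pr z) z)\<bar> \<le> nm (b z - pr z) * nm z" by (rule Re_ip_bound)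
    also have "\<dots> \<le> del * nm z * nm z" unfolding del_def
      using opnorm_bound[OF bops_diff(1)[OF bb prb], of z] by (simp add: mult_right_mono)
    finally show ?thesis by (simp add: power2_eq_square mult_ac)
  qed
  have comm: "pr (b x) = b (pr x)" for x by (rule closure_commute[OF SA CA pc bA])
  have finb: "finite (op_spectrum sc ip b)" by (rule finspec[OF bA adjb])
  define S where "S = insert 0 (op_spectrum sc ip b)"
  define m where "m = (\<Prod>s\<in>S. [:-s, 1:])"
  have mb: "peval m b = (\<lambda>x. 0)" unfolding m_def S_def by (rule sa_minpoly[OF bb hb finb])
  have SR: "S \<subseteq> \<real>" unfolding S_def using spec_real[OF bb hb] by (auto simp: complex_is_Real_iff)
  have finS: "finite S" unfolding S_def using finb by simp
  have van: "peval E b x = 0" if "\<And>s. s \<in> S \<Longrightarrow> poly E s = 0" for E x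
  proof -
    have "m dvd E" unfolding m_def by (rule vanish_dvd[OF finS that])
    then obtain Q where "E = m * Q" by (rule dvdE)
    then show ?thesis by (simp add: peval_mult[OF lb] mb)
  qed
  obtain g where rg: "rpoly g" and vg: "\<And>s. s \<in> S \<Longrightarrow> poly g s = (if Re s > 1/2 then 1 else 0)"
  proof -
    have "\<exists>P. rpoly P \<and> (\<forall>s\<in>S. poly P s = (\<lambda>s. if Re s > 1/2 then 1 else 0) s)"
      by (rule interp[OF finS SR]) auto
    then show ?thesis using that by auto
  qed
  obtain r1 where rr1: "rpoly r1"
    and v1: "\<And>s. s \<in> S \<Longrightarrow> poly r1 s = (if Re s > 1/2 then complex_of_real (sqrt (Re s - 1/2)) else 0)"
  proof -
    have "\<exists>P. rpoly P \<and> (\<forall>s\<in>S. poly P s = (\<lambda>s. if Re s > 1/2 then complex_of_real (sqrt (Re s - 1/2)) else 0) s)"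
      by (rule interp[OF finS SR]) auto
    then show ?thesis using that by auto
  qed
  obtain r2 where rr2: "rpoly r2"
    and v2: "\<And>s. s \<in> S \<Longrightarrow> poly r2 s = (if Re s > 1/2 then 0 else complex_of_real (sqrt (1/2 - Re s)))"
  proof -
    have "\<exists>P. rpoly P \<and> (\<forall>s\<in>S. poly P s = (\<lambda>s. if Re s > 1/2 then 0 else complex_of_real (sqrt (1/2 - Re s))) s)"
      by (rule interp[OF finS SR]) auto
    then show ?thesis using that by auto
  qed
  define q where "q = peval g b"
  define R1 where "R1 = peval r1 b"
  define R2 where "R2 = peval r2 b"
  have id3: "q (q x) = q x" for x
  proof -
    have "peval (g * g - g) b x = 0"
      by (rule van) (auto simp: vg)
    then have "peval g b (peval g b x) - peval g b x = 0" by (simp only: peval_diff peval_mult[OF lb])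
    then show ?thesis unfolding q_def by simp
  qed
  have id1: "b (q x) - sc (1/2) (q x) = R1 (R1 x)" for x
  proof -
    have "peval ([:-(1/2), 1:] * g - r1 * r1) b x = 0"
    proof (rule van)
      fix s assume sS: "s \<in> S"
      then have sr: "s = complex_of_real (Re s)" using SR real_of_Re by auto
      show "poly ([:-(1/2), 1:] * g - r1 * r1) s = 0"
      proof (cases "Re s > 1/2")
        case True
        then have "poly (r1 * r1) s = complex_of_real (Re s - 1/2)"
          using v1[OF sS] sqrt_sq_c[of "Re s - 1/2"] by (simp add: power2_eq_square)
        then show ?thesis using vg[OF sS] True by (simp add: sr[symmetric])
      qed (use vg[OF sS] v1[OF sS] in simp)
    qed
    then have "(b (peval g b x) - sc (1/2) (peval g b x)) - peval r1 b (peval r1 b x) = 0"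
      by (simp only: peval_diff peval_mult[OF lb] peval_X[OF lb])
    then show ?thesis unfolding q_def R1_def by simp
  qed
  have id2: "b (q x - x) - sc (1/2) (q x - x) = R2 (R2 x)" for x
  proof -
    have "peval ([:-(1/2), 1:] * (g - 1) - r2 * r2) b x = 0"
    proof (rule van)
      fix s assume sS: "s \<in> S"
      then have sr: "s = complex_of_real (Re s)" using SR real_of_Re by auto
      show "poly ([:-(1/2), 1:] * (g - 1) - r2 * r2) s = 0"
      proof (cases "Re s > 1/2")
        case False
        then have "poly (r2 * r2) s = complex_of_real (1/2 - Re s)"
          using v2[OF sS] sqrt_sq_c[of "1/2 - Re s"] by (simp add: power2_eq_square)
        then show ?thesis using vg[OF sS] False by (simp add: sr[symmetric] algebra_simps)
      qed (use vg[OF sS] v2[OF sS] in simp)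
    qed
    then have "(b (peval g b x - x) - sc (1/2) (peval g b x - x)) - peval r2 b (peval r2 b x) = 0"
      by (simp only: peval_diff peval_mult[OF lb] peval_X[OF lb] peval_one)
    then show ?thesis unfolding q_def R2_def by simp
  qed
  have qA: "q \<in> A"
  proof -
    have "coeff g 0 = poly g 0" by (simp add: poly_0_coeff_0)
    also have "\<dots> = 0" using vg[of 0] unfolding S_def by simp
    finally show ?thesis unfolding q_def by (rule peval_in[OF SA bA])
  qed
  have hR1: "hsym R1" unfolding R1_def using peval_hsym[OF bb hb] rr1 by (simp add: rcoeffs_rpoly)
  have hR2: "hsym R2" unfolding R2_def using peval_hsym[OF bb hb] rr2 by (simp add: rcoeffs_rpoly)
  have lq: "lin q" unfolding q_def by (rule peval_lin[OF lb])
  have qcomm: "pr (q x) = q (pr x)" for x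
    unfolding q_def by (rule peval_commute[OF lb lpr comm])
  have pos1: "Re (ip (R1 (R1 z)) z) \<ge> 0" for z
    using hsymD[OF hR1, of "R1 z" z] by (simp add: ip_self_nm)
  have pos2: "Re (ip (R2 (R2 z)) z) \<ge> 0" for z
    using hsymD[OF hR2, of "R2 z" z] by (simp add: ip_self_nm)
  have half: "Re (ip (sc (1/2) z) z) = 1/2 * nm z ^ 2" for z by (simp add: ip_sc_left ip_self_nm)
  have partA: "q (y - pr y) = 0" for y
  proof -
    define z where "z = q (y - pr y)"
    have qz: "q z = z" unfolding z_def by (rule id3)
    have prz: "pr z = 0" unfolding z_def qcomm by (simp add: lin_diff[OF lpr] pp lin_zero[OF lq])
    have "Re (ip (b z - sc (1/2) z) z) \<ge> 0" using id1[of z] pos1[of z] qz by simp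
    then have "Re (ip (b z) z) \<ge> (1/2) * nm z ^ 2"
      by (simp add: ip_diff_left half)
    moreover have "Re (ip (b z) z) \<le> del * nm z ^ 2" using delb[of z] prz by simp
    ultimately have "(1/2 - del) * nm z ^ 2 \<le> 0" by (simp add: algebra_simps)
    then have "nm z ^ 2 \<le> 0" using del by (simp add: mult_le_0_iff)
    then show ?thesis unfolding z_def[symmetric] by simp
  qed
  have partB: "pr y - q (pr y) = 0" for y
  proof -
    define z where "z = pr y - q (pr y)"
    have prz: "pr z = z" unfolding z_def by (simp add: lin_diff[OF lpr] pp qcomm)
    have qz: "q z = 0" unfolding z_def by (simp add: lin_diff[OF lq] id3)
    have "b (q z - z) - sc (1/2) (q z - z) = - (b z - sc (1/2) z)"
      using qz by (simp add: lin_minus[OF lb] sc_minus_right)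
    then have "Re (ip (- (b z - sc (1/2) z)) z) \<ge> 0" using id2[of z] pos2[of z] by simp
    then have "Re (ip (b z) z) \<le> (1/2) * nm z ^ 2"
      by (simp add: ip_minus_left ip_diff_left half)
    moreover have "Re (ip (b z) z) = nm z ^ 2 + Re (ip (b z - pr z) z)"
      using prz by (simp add: ip_diff_left nm_sq)
    moreover have "Re (ip (b z - pr z) z) \<ge> - del * nm z ^ 2" using delb[of z] by linarith
    ultimately have "(1/2 - del) * nm z ^ 2 \<le> 0" by (simp add: algebra_simps)
    then have "nm z ^ 2 \<le> 0" using del by (simp add: mult_le_0_iff)
    then show ?thesis unfolding z_def[symmetric] by simp
  qed
  have "pr = q"
  proof
    fix y
    have "q y = q (pr y)" using partA[of y] by (simp add: lin_diff[OF lq])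
    then show "pr y = q y" using partB[of y] by simp
  qed
  then show ?thesis using qA by simp
qed

end


context hilb begin

context
  fixes A assumes SA: "star_subalgebra sc ip A"
begin

abbreviation "B \<equiv> norm_closure sc ip A"

lemma B_bops: "T \<in> B \<Longrightarrow> T \<in> bops sc ip" by (rule closure_bops[OF SA])

lemma B_A: "a \<in> A \<Longrightarrow> a \<in> B" by (rule ss_in_closure[OF SA])

lemma B_I: "T \<in> bops sc ip \<Longrightarrow> (\<And>e. e > 0 \<Longrightarrow> \<exists>a\<in>A. opnorm ip (\<lambda>x. T x - a x) < e) \<Longrightarrow> T \<in> B"
  unfolding norm_closure_def by blast

lemma B_zero: "(\<lambda>x. 0) \<in> B" by (rule B_A[OF ss_zero[OF SA]])

lemma B_plus: assumes T: "T \<in> B" and S: "S \<in> B" shows "(\<lambda>x. T x + S x) \<in> B"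
proof (rule B_I)
  show "(\<lambda>x. T x + S x) \<in> bops sc ip" by (rule bops_plus(1)[OF B_bops[OF T] B_bops[OF S]])
next
  fix e :: real assume e: "e > 0"
  obtain a where a: "a \<in> A" "opnorm ip (\<lambda>x. T x - a x) < e/2" using closure_approx[OF SA T, of "e/2"] e by auto
  obtain a' where a': "a' \<in> A" "opnorm ip (\<lambda>x. S x - a' x) < e/2" using closure_approx[OF SA S, of "e/2"] e by auto
  have "(\<lambda>x. (T x + S x) - (a x + a' x)) = (\<lambda>x. (T x - a x) + (S x - a' x))" by (simp add: algebra_simps)
  then have "opnorm ip (\<lambda>x. (T x + S x) - (a x + a' x)) \<le> opnorm ip (\<lambda>x. T x - a x) + opnorm ip (\<lambda>x. S x - a' x)"
    using bops_plus(2)[OF bops_diff(1)[OF B_bops[OF T] ss_bops[OF SA a(1)]] bops_diff(1)[OF B_bops[OF S] ss_bops[OF SA a'(1)]]]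
    by simp
  then show "\<exists>b\<in>A. opnorm ip (\<lambda>x. T x + S x - b x) < e"
    using a a' ss_plus[OF SA a(1) a'(1)] by (intro bexI[of _ "\<lambda>x. a x + a' x"]) auto
qed

lemma B_scale: assumes T: "T \<in> B" shows "(\<lambda>x. sc c (T x)) \<in> B"
proof (rule B_I)
  show "(\<lambda>x. sc c (T x)) \<in> bops sc ip" by (rule bops_scale(1)[OF B_bops[OF T]])
next
  fix e :: real assume e: "e > 0"
  have ep: "e / (cmod c + 1) > 0" using e by (intro divide_pos_pos) (auto intro: add_nonneg_pos)
  obtain a where a: "a \<in> A" "opnorm ip (\<lambda>x. T x - a x) < e / (cmod c + 1)"
    using closure_approx[OF SA T ep] by auto
  have Db: "(\<lambda>x. T x - a x) \<in> bops sc ip" by (rule bops_diff(1)[OF B_bops[OF T] ss_bops[OF SA a(1)]])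
  have "(\<lambda>x. sc c (T x) - sc c (a x)) = (\<lambda>x. sc c (T x - a x))" by (simp add: sc_diff_right)
  then have "opnorm ip (\<lambda>x. sc c (T x) - sc c (a x)) \<le> cmod c * opnorm ip (\<lambda>x. T x - a x)"
    using bops_scale(2)[OF Db] by simp
  also have "\<dots> \<le> cmod c * (e / (cmod c + 1))" using a(2) by (intro mult_left_mono) auto
  also have "\<dots> < e"
  proof -
    have "cmod c * e < (cmod c + 1) * e" using e by simp
    then show ?thesis by (simp add: pos_divide_less_eq add_nonneg_pos mult.commute)
  qed
  finally have "opnorm ip (\<lambda>x. sc c (T x) - sc c (a x)) < e" .
  then show "\<exists>b\<in>A. opnorm ip (\<lambda>x. sc c (T x) - b x) < e"
    using ss_scale[OF SA a(1), of c] by (intro bexI[of _ "\<lambda>x. sc c (a x)"]) auto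
qed

lemma B_diff: assumes T: "T \<in> B" and S: "S \<in> B" shows "(\<lambda>x. T x - S x) \<in> B"
proof -
  have "(\<lambda>x. T x - S x) = (\<lambda>x. T x + sc (-1) (S x))" by (simp add: sc_minus_left)
  then show ?thesis using B_plus[OF T B_scale[OF S]] by simp
qed

lemma B_adj: assumes T: "T \<in> B" shows "adj ip T \<in> B"
proof (rule B_I)
  show "adj ip T \<in> bops sc ip" by (rule adj_bops(1)[OF B_bops[OF T]])
next
  fix e :: real assume e: "e > 0"
  obtain a where a: "a \<in> A" "opnorm ip (\<lambda>x. T x - a x) < e" using closure_approx[OF SA T e] by auto
  have Db: "(\<lambda>x. T x - a x) \<in> bops sc ip" by (rule bops_diff(1)[OF B_bops[OF T] ss_bops[OF SA a(1)]])
  have "adj ip (\<lambda>x. T x - a x) = (\<lambda>x. adj ip T x - adj ip a x)"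
    by (rule adj_diff[OF B_bops[OF T] ss_bops[OF SA a(1)]])
  then have "opnorm ip (\<lambda>x. adj ip T x - adj ip a x) \<le> opnorm ip (\<lambda>x. T x - a x)"
    using adj_bops(2)[OF Db] by simp
  then show "\<exists>b\<in>A. opnorm ip (\<lambda>x. adj ip T x - b x) < e"
    using a ss_adj[OF SA a(1)] by (intro bexI[of _ "adj ip a"]) auto
qed

lemma B_comp: assumes T: "T \<in> B" and S: "S \<in> B" shows "T \<circ> S \<in> B"
proof (rule B_I)
  have Tb: "T \<in> bops sc ip" and Sb: "S \<in> bops sc ip" using B_bops T S by auto
  show "T \<circ> S \<in> bops sc ip" by (rule bops_comp(1)[OF Tb Sb])
  fix e :: real assume e: "e > 0"
  define K where "K = opnorm ip S + opnorm ip T + 1"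
  have K: "K > 0" "opnorm ip S \<le> K" using opnorm_nonneg[OF Sb] opnorm_nonneg[OF Tb] unfolding K_def by auto
  define d where "d = min 1 (e / (4 * K))"
  have d: "d > 0" "d \<le> 1" "d * K \<le> e / 4" using e K unfolding d_def by (auto simp: field_simps min_def)
  obtain a where a: "a \<in> A" "opnorm ip (\<lambda>x. T x - a x) < d" using closure_approx[OF SA T d(1)] by auto
  obtain a' where a': "a' \<in> A" "opnorm ip (\<lambda>x. S x - a' x) < d" using closure_approx[OF SA S d(1)] by auto
  have ab: "a \<in> bops sc ip" "a' \<in> bops sc ip" using ss_bops[OF SA] a a' by auto
  have D1: "(\<lambda>x. T x - a x) \<in> bops sc ip" by (rule bops_diff(1)[OF Tb ab(1)])
  have D2: "(\<lambda>x. S x - a' x) \<in> bops sc ip" by (rule bops_diff(1)[OF Sb ab(2)])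
  have na: "opnorm ip a \<le> K"
  proof -
    have "a = (\<lambda>x. T x - (T x - a x))" by simp
    then have "opnorm ip a \<le> opnorm ip T + opnorm ip (\<lambda>x. T x - a x)"
      using bops_diff(2)[OF Tb D1] by metis
    then show ?thesis using a(2) d unfolding K_def using opnorm_nonneg[OF Sb] by linarith
  qed
  have SK: "nm (S y) \<le> K * nm y" for y
    using opnorm_bound[OF Sb, of y] K(2) by (meson mult_right_mono nm_nonneg order_trans)
  have D2d: "nm (S y - a' y) \<le> d * nm y" for y
    using opnorm_bound[OF D2, of y] a'(2) by (smt (verit) mult_right_mono nm_nonneg)
  have "nm ((T \<circ> S) x - (a \<circ> a') x) \<le> (e/2) * nm x" for x
  proof -
    have "(T \<circ> S) x - (a \<circ> a') x = (T (S x) - a (S x)) + a (S x - a' x)"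
      by (simp add: lin_diff[OF bops_lin[OF ab(1)]])
    then have "nm ((T \<circ> S) x - (a \<circ> a') x) \<le> nm (T (S x) - a (S x)) + nm (a (S x - a' x))"
      by (simp only: nm_triangle)
    also have "\<dots> \<le> d * (K * nm x) + K * (d * nm x)"
    proof (rule add_mono)
      have "nm (T (S x) - a (S x)) \<le> opnorm ip (\<lambda>x. T x - a x) * nm (S x)"
        using opnorm_bound[OF D1, of "S x"] by simp
      also have "\<dots> \<le> d * (K * nm x)"
        using a(2) SK[of x] K opnorm_nonneg[OF D1] by (intro mult_mono) auto
      finally show "nm (T (S x) - a (S x)) \<le> d * (K * nm x)" .
      have "nm (a (S x - a' x)) \<le> opnorm ip a * nm (S x - a' x)" by (rule opnorm_bound[OF ab(1)])
      also have "\<dots> \<le> K * (d * nm x)"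
        using na D2d[of x] opnorm_nonneg[OF ab(1)] K by (intro mult_mono) auto
      finally show "nm (a (S x - a' x)) \<le> K * (d * nm x)" .
    qed
    also have "\<dots> = 2 * (d * K) * nm x" by (simp add: algebra_simps)
    also have "\<dots> \<le> (e/2) * nm x" using d by (intro mult_right_mono) auto
    finally show ?thesis .
  qed
  then have "opnorm ip (\<lambda>x. (T \<circ> S) x - (a \<circ> a') x) \<le> e/2"
    using e by (intro opnorm_le bops_diff(1) bops_comp(1) Tb Sb ab) auto
  moreover have "a \<circ> a' \<in> A" by (rule ss_comp[OF SA a(1) a'(1)])
  ultimately show "\<exists>b\<in>A. opnorm ip (\<lambda>x. (T \<circ> S) x - b x) < e"
    using e by (intro bexI[of _ "a \<circ> a'"]) auto
qed

end
end


lemma C0_cont: "f \<in> C0 \<Longrightarrow> continuous_on UNIV f" unfolding C0_def by blast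
lemma C0_compact: "f \<in> C0 \<Longrightarrow> e > 0 \<Longrightarrow> compact {x. norm (f x) \<ge> e}" unfolding C0_def by blast

lemma C0_dom:
  fixes f g :: "'k::topological_space \<Rightarrow> complex"
  assumes f: "continuous_on UNIV f" and g: "g \<in> C0"
    and dom: "\<And>e. e > 0 \<Longrightarrow> \<exists>e'>0. \<forall>t. e \<le> cmod (f t) \<longrightarrow> e' \<le> cmod (g t)"
  shows "f \<in> C0"
  unfolding C0_def
proof (intro CollectI conjI allI impI f)
  fix e :: real assume e: "e > 0"
  obtain e' where e': "e' > 0" "\<And>t. e \<le> cmod (f t) \<Longrightarrow> e' \<le> cmod (g t)" using dom[OF e] by blast
  have cl: "closed {x. e \<le> norm (f x)}"
    by (rule closed_Collect_le) (auto intro!: continuous_intros f)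
  have "{x. e \<le> norm (f x)} = {x. e' \<le> norm (g x)} \<inter> {x. e \<le> norm (f x)}" using e' by auto
  moreover have "compact ({x. e' \<le> norm (g x)} \<inter> {x. e \<le> norm (f x)})"
    using C0_compact[OF g e'(1)] cl by blast
  ultimately show "compact {x. e \<le> norm (f x)}" by simp
qed

context hilb begin

context
  fixes A and \<Phi> :: "('h \<Rightarrow> 'h) \<Rightarrow> ('k::t2_space \<Rightarrow> complex)"
  assumes SA: "star_subalgebra sc ip A" and PHI: "star_iso_onto_C0 sc ip (norm_closure sc ip A) \<Phi>"
begin

abbreviation "BC \<equiv> norm_closure sc ip A"

lemma P_bij: "bij_betw \<Phi> BC C0" using PHI unfolding star_iso_onto_C0_def by blast
lemma P_add: "T \<in> BC \<Longrightarrow> S \<in> BC \<Longrightarrow> \<Phi> (\<lambda>x. T x + S x) = (\<lambda>t. \<Phi> T t + \<Phi> S t)"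
  using PHI unfolding star_iso_onto_C0_def by blast
lemma P_scale: "T \<in> BC \<Longrightarrow> \<Phi> (\<lambda>x. sc c (T x)) = (\<lambda>t. c * \<Phi> T t)"
  using PHI unfolding star_iso_onto_C0_def by blast
lemma P_mult: "T \<in> BC \<Longrightarrow> S \<in> BC \<Longrightarrow> \<Phi> (T \<circ> S) = (\<lambda>t. \<Phi> T t * \<Phi> S t)"
  using PHI unfolding star_iso_onto_C0_def by blast
lemma P_adj: "T \<in> BC \<Longrightarrow> \<Phi> (adj ip T) = (\<lambda>t. cnj (\<Phi> T t))"
  using PHI unfolding star_iso_onto_C0_def by blast

lemma P_inj: "T \<in> BC \<Longrightarrow> S \<in> BC \<Longrightarrow> \<Phi> T = \<Phi> S \<Longrightarrow> T = S"
  using P_bij unfolding bij_betw_def inj_on_def by blast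
lemma P_C0: "T \<in> BC \<Longrightarrow> \<Phi> T \<in> C0"
  using P_bij unfolding bij_betw_def by blast
lemma P_inv_B: "f \<in> C0 \<Longrightarrow> inv_into BC \<Phi> f \<in> BC"
  using P_bij unfolding bij_betw_def by (metis inv_into_into)
lemma P_inv_eq: "f \<in> C0 \<Longrightarrow> \<Phi> (inv_into BC \<Phi> f) = f"
  using P_bij unfolding bij_betw_def by (metis f_inv_into_f)
lemma P_inv_of: "T \<in> BC \<Longrightarrow> inv_into BC \<Phi> (\<Phi> T) = T"
  using P_bij unfolding bij_betw_def by (metis inv_into_f_f)

lemma P_zero: "\<Phi> (\<lambda>x. 0) = (\<lambda>t. 0)"
  using P_scale[OF B_zero[OF SA], of 0] by simp

lemma P_diff: "T \<in> BC \<Longrightarrow> S \<in> BC \<Longrightarrow> \<Phi> (\<lambda>x. T x - S x) = (\<lambda>t. \<Phi> T t - \<Phi> S t)"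
proof -
  assume T: "T \<in> BC" and S: "S \<in> BC"
  have "(\<lambda>x. T x - S x) = (\<lambda>x. T x + sc (-1) (S x))" by (simp add: sc_minus_left)
  then show ?thesis using P_add[OF T B_scale[OF SA S]] P_scale[OF S, of "-1"] by simp
qed

lemma P_zero_iff: "T \<in> BC \<Longrightarrow> \<Phi> T = (\<lambda>t. 0) \<Longrightarrow> T = (\<lambda>x. 0)"
  using P_inj[OF _ B_zero[OF SA]] P_zero by metis

lemma P_real_sym: assumes T: "T \<in> BC" and r: "\<And>t. Im (\<Phi> T t) = 0" shows "adj ip T = T"
proof (rule P_inj[OF B_adj[OF SA T] T])
  have "(\<lambda>t. cnj (\<Phi> T t)) = \<Phi> T"
  proof
    fix t show "cnj (\<Phi> T t) = \<Phi> T t" using r[of t] by (simp add: complex_eq_iff)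
  qed
  then show "\<Phi> (adj ip T) = \<Phi> T" using P_adj[OF T] by simp
qed

lemma P_sym_real: assumes T: "T \<in> BC" and s: "adj ip T = T" shows "Im (\<Phi> T t) = 0"
proof -
  have "\<Phi> T t = cnj (\<Phi> T t)" using P_adj[OF T] s by metis
  then show ?thesis by (metis cnj.simps(2) complex_cnj_cancel_iff neg_equal_zero)
qed

lemma spec_range:
  assumes W: "W \<in> BC" and l: "l \<noteq> 0" and d: "d > 0" and far: "\<And>t. d \<le> cmod (\<Phi> W t - l)"
  shows "invert (\<lambda>x. W x - sc l x)"
proof -
  define w where "w = \<Phi> W"
  have wC: "w \<in> C0" unfolding w_def by (rule P_C0[OF W])
  have wl: "w t - l \<noteq> 0" for t using far[of t] d unfolding w_def by auto
  define r where "r = (\<lambda>t. w t / (l * (w t - l)))"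
  have rC: "r \<in> C0"
  proof (rule C0_dom[OF _ wC])
    show "continuous_on UNIV r" unfolding r_def using C0_cont[OF wC] wl l
      by (auto intro!: continuous_intros)
  next
    fix e :: real assume e: "e > 0"
    show "\<exists>e'>0. \<forall>t. e \<le> cmod (r t) \<longrightarrow> e' \<le> cmod (w t)"
    proof (intro exI conjI allI impI)
      show "e * (cmod l * d) > 0" using e l d by simp
      fix t assume et: "e \<le> cmod (r t)"
      have "cmod (r t) = cmod (w t) / (cmod l * cmod (w t - l))" unfolding r_def by (simp add: norm_divide norm_mult)
      also have "\<dots> \<le> cmod (w t) / (cmod l * d)"
      proof (rule divide_left_mono)
        show "cmod l * d \<le> cmod l * cmod (w t - l)" using far[of t] l unfolding w_def by (simp add: mult_left_mono)
        show "0 \<le> cmod (w t)" by simp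
        show "0 < cmod l * cmod (w t - l) * (cmod l * d)" using l d wl[of t] by simp
      qed
      finally have "e \<le> cmod (w t) / (cmod l * d)" using et by simp
      then show "e * (cmod l * d) \<le> cmod (w t)" using l d by (simp add: pos_le_divide_eq)
    qed
  qed
  define R where "R = inv_into BC \<Phi> r"
  have RB: "R \<in> BC" unfolding R_def by (rule P_inv_B[OF rC])
  have Rr: "\<Phi> R = r" unfolding R_def by (rule P_inv_eq[OF rC])
  have Wb: "W \<in> bops sc ip" and Rb: "R \<in> bops sc ip" using B_bops[OF SA] W RB by auto
  have lW: "lin W" and lR: "lin R" using bops_lin Wb Rb by auto
  define E where "E = (\<lambda>x. W (R x) - sc (1/l) (W x) - sc l (R x))"
  have WR: "(\<lambda>x. W (R x)) = W \<circ> R" by (simp add: comp_def)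
  have WRB: "(\<lambda>x. W (R x)) \<in> BC" unfolding WR by (rule B_comp[OF SA W RB])
  have B1: "(\<lambda>x. W (R x) - sc (1/l) (W x)) \<in> BC" by (rule B_diff[OF SA WRB B_scale[OF SA W]])
  have B2: "(\<lambda>x. sc l (R x)) \<in> BC" by (rule B_scale[OF SA RB])
  have EB: "E \<in> BC" unfolding E_def by (rule B_diff[OF SA B1 B2])
  have P1: "\<Phi> (\<lambda>x. W (R x)) = (\<lambda>t. w t * r t)" unfolding WR P_mult[OF W RB] Rr w_def ..
  have "\<Phi> E = (\<lambda>t. \<Phi> (\<lambda>x. W (R x) - sc (1/l) (W x)) t - \<Phi> (\<lambda>x. sc l (R x)) t)"
    unfolding E_def by (rule P_diff[OF B1 B2])
  also have "\<Phi> (\<lambda>x. W (R x) - sc (1/l) (W x)) = (\<lambda>t. \<Phi> (\<lambda>x. W (R x)) t - \<Phi> (\<lambda>x. sc (1/l) (W x)) t)"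
    by (rule P_diff[OF WRB B_scale[OF SA W]])
  finally have "\<Phi> E = (\<lambda>t. w t * r t - (1/l) * w t - l * r t)"
    unfolding P1 P_scale[OF W] P_scale[OF RB] Rr w_def by simp
  also have "\<dots> = (\<lambda>t. 0)"
  proof
    fix t
    have "w t * r t - l * r t = r t * (w t - l)" by (simp add: algebra_simps)
    also have "\<dots> = w t / l" unfolding r_def using wl[of t] l
      by (simp add: divide_simps)
    finally have "w t * r t - l * r t = w t / l" .
    then show "w t * r t - (1/l) * w t - l * r t = 0" by (simp add: field_simps)
  qed
  finally have E0: "E = (\<lambda>x. 0)" by (rule P_zero_iff[OF EB])
  then have E0x: "W (R x) - sc (1/l) (W x) - sc l (R x) = 0" for x
    using fun_cong[OF E0, of x] unfolding E_def by simp
  have RW: "R (W x) = W (R x)" for x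
  proof -
    have "\<Phi> (R \<circ> W) = \<Phi> (W \<circ> R)" using P_mult[OF RB W] P_mult[OF W RB] by (simp add: mult.commute)
    then have "R \<circ> W = W \<circ> R" by (rule P_inj[OF B_comp[OF SA RB W] B_comp[OF SA W RB]])
    then show ?thesis by (metis comp_apply)
  qed
  define Z where "Z = (\<lambda>x. R x - sc (1/l) x)"
  have Zb: "Z \<in> bops sc ip" unfolding Z_def by (rule bops_diff(1)[OF Rb bops_sc_id])
  have "W (Z x) - sc l (Z x) = x" for x
  proof -
    have "W (Z x) - sc l (Z x) = (W (R x) - sc (1/l) (W x) - sc l (R x)) + sc (l * (1/l)) x"
      unfolding Z_def by (simp add: lin_diff[OF lW] lin_sc[OF lW] sc_diff_right sc_assoc algebra_simps)
    then show ?thesis using E0x[of x] l by simp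
  qed
  moreover have "Z (W x - sc l x) = x" for x
  proof -
    have "Z (W x - sc l x) = (W (R x) - sc (1/l) (W x) - sc l (R x)) + sc ((1/l) * l) x"
      unfolding Z_def by (simp add: lin_diff[OF lR] lin_sc[OF lR] RW sc_diff_right sc_assoc algebra_simps)
    then show ?thesis using E0x[of x] l by simp
  qed
  ultimately show ?thesis unfolding invert_def using Zb by blast
qed

end
end


context hilb begin

context
  fixes A and \<Phi> :: "('h \<Rightarrow> 'h) \<Rightarrow> ('k::t2_space \<Rightarrow> complex)"
  assumes SA: "star_subalgebra sc ip A" and PHI: "star_iso_onto_C0 sc ip (norm_closure sc ip A) \<Phi>"
begin

abbreviation "BD \<equiv> norm_closure sc ip A"

lemma easy_dir:
  assumes W: "W \<in> BD" and r: "\<And>t. Im (\<Phi> W t) = 0" and M: "\<And>t. cmod (\<Phi> W t) \<le> M"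
  shows "opnorm ip W \<le> M"
proof -
  have Wb: "W \<in> bops sc ip" by (rule B_bops[OF SA W])
  have M0: "M \<ge> 0" using M[of undefined] norm_ge_zero order_trans by blast
  show ?thesis
  proof (cases "W = (\<lambda>x. 0)")
    case True then show ?thesis using opnorm_zero_iff[OF Wb] M0 by simp
  next
    case False
    have hW: "hsym W" using hsym_iff[OF Wb] P_real_sym[OF SA PHI W r] by simp
    show ?thesis
    proof (rule ccontr)
      assume "\<not> opnorm ip W \<le> M"
      then have big: "opnorm ip W > M" by simp
      have inv: "invert (\<lambda>x. W x - sc (complex_of_real s) x)" if s: "\<bar>s\<bar> = opnorm ip W" for s
      proof (rule spec_range[OF SA PHI W])
        show "complex_of_real s \<noteq> 0" using s big M0 by auto
        show "0 < opnorm ip W - M" using big by simp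
        fix t
        have "cmod (complex_of_real s) - cmod (\<Phi> W t) \<le> cmod (\<Phi> W t - complex_of_real s)"
          by (metis norm_minus_commute norm_triangle_ineq2)
        then show "opnorm ip W - M \<le> cmod (\<Phi> W t - complex_of_real s)" using s M[of t] by simp
      qed
      have "complex_of_real (opnorm ip W) \<notin> op_spectrum sc ip W"
        using inv[of "opnorm ip W"] opnorm_nonneg[OF Wb] not_spec_iff by simp
      moreover have "complex_of_real (- opnorm ip W) \<notin> op_spectrum sc ip W"
        using inv[of "- opnorm ip W"] opnorm_nonneg[OF Wb] not_spec_iff by simp
      ultimately show False using norm_in_spec[OF Wb hW False] by blast
    qed
  qed
qed

lemma hard_dir:
  assumes Y: "Y \<in> BD" and r: "\<And>t. Im (\<Phi> Y t) = 0" and nz: "\<Phi> Y t0 \<noteq> 0"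
  shows "\<Phi> Y t0 \<in> op_spectrum sc ip Y"
proof (rule ccontr)
  define u where "u = \<Phi> Y"
  define lam where "lam = u t0"
  have Yb: "Y \<in> bops sc ip" by (rule B_bops[OF SA Y])
  have uC: "u \<in> C0" unfolding u_def by (rule P_C0[OF SA PHI Y])
  have ucont: "continuous_on UNIV u" by (rule C0_cont[OF uC])
  have lam0: "cmod lam > 0" using nz unfolding lam_def u_def by simp
  have lamR: "Im lam = 0" using r unfolding lam_def u_def by simp
  assume "\<not> \<Phi> Y t0 \<in> op_spectrum sc ip Y"
  then have "invert (\<lambda>x. Y x - sc lam x)" using not_spec_iff unfolding lam_def u_def by blast
  then obtain Z where Zb: "Z \<in> bops sc ip" and ZY: "\<And>x. Z (Y x - sc lam x) = x"
    unfolding invert_def by blast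
  define C where "C = opnorm ip Z"
  have C0': "C \<ge> 0" unfolding C_def by (rule opnorm_nonneg[OF Zb])
  define ep where "ep = min (cmod lam / 4) (1 / (4 * (C + 1)))"
  have ep: "ep > 0" "4 * ep \<le> cmod lam" "3 * ep * C < 1"
  proof -
    show "ep > 0" unfolding ep_def using lam0 C0' by simp
    show "4 * ep \<le> cmod lam" unfolding ep_def by linarith
    have "ep \<le> 1 / (4 * (C + 1))" unfolding ep_def by linarith
    then have "(3 * C) * ep \<le> (3 * C) * (1 / (4 * (C + 1)))" using C0' by (intro mult_left_mono) auto
    then have "3 * ep * C \<le> 3 * C / (4 * (C + 1))" by (simp add: mult_ac)
    also have "\<dots> < 1" using C0' by (simp add: pos_divide_less_eq)
    finally show "3 * ep * C < 1" .
  qed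
  define h where "h = (\<lambda>t. complex_of_real (max 0 (min 1 (2 - cmod (u t - lam) / ep))))"
  define k where "k = (\<lambda>t. complex_of_real (max 0 (min 1 (3 - cmod (u t - lam) / ep))))"
  have hC: "h \<in> C0"
  proof (rule C0_dom[OF _ uC])
    show "continuous_on UNIV h" unfolding h_def using ucont ep(1) by (auto intro!: continuous_intros)
  next
    fix e :: real assume e: "e > 0"
    show "\<exists>e'>0. \<forall>t. e \<le> cmod (h t) \<longrightarrow> e' \<le> cmod (u t)"
    proof (intro exI conjI allI impI)
      show "ep > 0" by (rule ep(1))
      fix t assume "e \<le> cmod (h t)"
      then have "h t \<noteq> 0" using e by auto
      then have "cmod (u t - lam) < 2 * ep" unfolding h_def using ep(1)
        by (auto simp: max_def min_def field_simps split: if_splits)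
      moreover have "cmod lam - cmod (u t) \<le> cmod (u t - lam)"
        by (metis norm_minus_commute norm_triangle_ineq2)
      ultimately show "ep \<le> cmod (u t)" using ep by linarith
    qed
  qed
  have kC: "k \<in> C0"
  proof (rule C0_dom[OF _ uC])
    show "continuous_on UNIV k" unfolding k_def using ucont ep(1) by (auto intro!: continuous_intros)
  next
    fix e :: real assume e: "e > 0"
    show "\<exists>e'>0. \<forall>t. e \<le> cmod (k t) \<longrightarrow> e' \<le> cmod (u t)"
    proof (intro exI conjI allI impI)
      show "ep > 0" by (rule ep(1))
      fix t assume "e \<le> cmod (k t)"
      then have "k t \<noteq> 0" using e by auto
      then have "cmod (u t - lam) < 3 * ep" unfolding k_def using ep(1)
        by (auto simp: max_def min_def field_simps split: if_splits)
      moreover have "cmod lam - cmod (u t) \<le> cmod (u t - lam)"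
        by (metis norm_minus_commute norm_triangle_ineq2)
      ultimately show "ep \<le> cmod (u t)" using ep by linarith
    qed
  qed
  have hk: "h t * k t = h t" for t
  proof (cases "cmod (u t - lam) < 2 * ep")
    case True
    then have "k t = 1" unfolding k_def using ep(1) by (simp add: max_def min_def field_simps)
    then show ?thesis by simp
  next
    case False
    then have "h t = 0" unfolding h_def using ep(1) by (simp add: max_def min_def field_simps)
    then show ?thesis by simp
  qed
  have ht0: "h t0 = 1" unfolding h_def lam_def by simp
  define H where "H = inv_into BD \<Phi> h"
  define K where "K = inv_into BD \<Phi> k"
  have HB: "H \<in> BD" and KB: "K \<in> BD" unfolding H_def K_def using P_inv_B[OF SA PHI] hC kC by auto
  have Hh: "\<Phi> H = h" and Kk: "\<Phi> K = k" unfolding H_def K_def using P_inv_eq[OF SA PHI] hC kC by auto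
  have Hb: "H \<in> bops sc ip" and Kb: "K \<in> bops sc ip" using B_bops[OF SA] HB KB by auto
  define G where "G = (\<lambda>x. Y (K x) - sc lam (K x))"
  have YK: "(\<lambda>x. Y (K x)) = Y \<circ> K" by (simp add: comp_def)
  have YKB: "(\<lambda>x. Y (K x)) \<in> BD" unfolding YK by (rule B_comp[OF SA Y KB])
  have GB: "G \<in> BD" unfolding G_def by (rule B_diff[OF SA YKB B_scale[OF SA KB]])
  have PG: "\<Phi> G = (\<lambda>t. (u t - lam) * k t)"
  proof -
    have "\<Phi> G = (\<lambda>t. \<Phi> (\<lambda>x. Y (K x)) t - \<Phi> (\<lambda>x. sc lam (K x)) t)"
      unfolding G_def by (rule P_diff[OF SA PHI YKB B_scale[OF SA KB]])
    also have "\<dots> = (\<lambda>t. u t * k t - lam * k t)"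
      unfolding YK P_mult[OF SA PHI Y KB] P_scale[OF SA PHI KB] Kk u_def ..
    finally show ?thesis by (simp add: algebra_simps)
  qed
  have Gnorm: "opnorm ip G \<le> 3 * ep"
  proof (rule easy_dir[OF GB])
    fix t
    show "Im (\<Phi> G t) = 0" unfolding PG k_def using r[of t] lamR unfolding u_def by simp
    show "cmod (\<Phi> G t) \<le> 3 * ep"
    proof (cases "cmod (u t - lam) < 3 * ep")
      case True
      have "cmod (k t) \<le> 1" unfolding k_def by (simp add: max_def min_def)
      then have "cmod (u t - lam) * cmod (k t) \<le> 3 * ep * 1"
        using True ep(1) by (intro mult_mono) auto
      then show ?thesis unfolding PG by (simp add: norm_mult)
    next
      case False
      then have "k t = 0" unfolding k_def using ep(1) by (simp add: max_def min_def field_simps)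
      then show ?thesis unfolding PG using ep(1) by simp
    qed
  qed
  have Kbound: "nm (K x) \<le> (3 * ep * C) * nm x" for x
  proof -
    have "K x = Z (G x)" unfolding G_def using ZY[of "K x"] by simp
    then have "nm (K x) \<le> C * nm (G x)" unfolding C_def using opnorm_bound[OF Zb] by simp
    also have "\<dots> \<le> C * (3 * ep * nm x)"
    proof (rule mult_left_mono[OF _ C0'])
      have "nm (G x) \<le> opnorm ip G * nm x" by (rule opnorm_bound[OF B_bops[OF SA GB]])
      also have "\<dots> \<le> 3 * ep * nm x" using Gnorm by (rule mult_right_mono) simp
      finally show "nm (G x) \<le> 3 * ep * nm x" .
    qed
    finally show ?thesis by (simp add: mult_ac)
  qed
  have Knorm: "opnorm ip K \<le> 3 * ep * C"
    by (rule opnorm_le[OF Kb _ Kbound]) (use ep C0' in auto)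
  have HK: "H \<circ> K = H"
  proof (rule P_inj[OF SA PHI B_comp[OF SA HB KB] HB])
    show "\<Phi> (H \<circ> K) = \<Phi> H" unfolding P_mult[OF SA PHI HB KB] Hh Kk using hk by (intro ext) (simp only:)
  qed
  have "opnorm ip H \<le> opnorm ip H * (3 * ep * C)"
    using bops_comp(2)[OF Hb Kb] Knorm opnorm_nonneg[OF Hb] HK
    by (smt (verit) mult_left_mono)
  then have "opnorm ip H * (1 - 3 * ep * C) \<le> 0" by (simp add: algebra_simps)
  then have "opnorm ip H \<le> 0" using ep(3) by (simp add: mult_le_0_iff)
  then have "opnorm ip H = 0" using opnorm_nonneg[OF Hb] by simp
  then have "H = (\<lambda>x. 0)" using opnorm_zero_iff[OF Hb] by simp
  then have "h = (\<lambda>t. 0)" using Hh P_zero[OF SA PHI] by simp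
  then show False using ht0 by (metis one_neq_zero)
qed

lemma hard_bound:
  assumes Y: "Y \<in> BD" and r: "\<And>t. Im (\<Phi> Y t) = 0"
  shows "cmod (\<Phi> Y t) \<le> opnorm ip Y"
proof (cases "\<Phi> Y t = 0")
  case True then show ?thesis using opnorm_nonneg[OF B_bops[OF SA Y]] by simp
next
  case False
  show ?thesis using spec_bound[OF B_bops[OF SA Y] hard_dir[OF Y r False]] .
qed

end
end


lemma indicator_C0:
  assumes "compact (U :: 'k::t2_space set)" "open U"
  shows "(indicator U :: 'k \<Rightarrow> complex) \<in> C0"
proof -
  have cU: "closed U" using assms(1) by (rule compact_imp_closed)
  have cont: "continuous_on UNIV (indicator U :: 'k \<Rightarrow> complex)"
    unfolding continuous_on_open_vimage[OF open_UNIV]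
  proof (intro allI impI)
    fix B :: "complex set" assume "open B"
    have "indicator U -` B = (if 1 \<in> B then U else {}) \<union> (if 0 \<in> B then - U else {})"
      by (auto simp: indicator_def of_bool_def split: if_splits)
    then show "open ((indicator U :: 'k \<Rightarrow> complex) -` B \<inter> UNIV)"
      using assms(2) cU by auto
  qed
  show ?thesis unfolding C0_def
  proof (intro CollectI conjI allI impI cont)
    fix e :: real assume e: "e > 0"
    have cl: "closed {x. e \<le> norm (indicator U x :: complex)}"
      by (rule closed_Collect_le) (auto intro!: continuous_intros cont)
    have "{x. e \<le> norm (indicator U x :: complex)} = U \<inter> {x. e \<le> norm (indicator U x :: complex)}"
      using e by (auto simp: indicator_def split: if_splits)
    then show "compact {x. e \<le> norm (indicator U x :: complex)}" using assms(1) cl by (metis compact_Int_closed)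
  qed
qed

context hilb begin

lemma sym_approx:
  assumes T: "T \<in> bops sc ip" and sT: "adj ip T = T" and ab: "a \<in> bops sc ip"
  defines "b \<equiv> (\<lambda>x. sc (1/2) (a x + adj ip a x))"
  shows "opnorm ip (\<lambda>x. T x - b x) \<le> opnorm ip (\<lambda>x. T x - a x)" "adj ip b = b"
proof -
  have aab: "adj ip a \<in> bops sc ip" by (rule adj_bops(1)[OF ab])
  show "adj ip b = b"
  proof -
    have "adj ip b = (\<lambda>x. sc (cnj (1/2)) (adj ip (\<lambda>x. a x + adj ip a x) x))"
      unfolding b_def by (rule adj_scale[OF bops_plus(1)[OF ab aab]])
    also have "adj ip (\<lambda>x. a x + adj ip a x) = (\<lambda>x. adj ip a x + adj ip (adj ip a) x)"
      by (rule adj_plus[OF ab aab])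
    also have "adj ip (adj ip a) = a" by (rule adj_adj[OF ab])
    finally show ?thesis unfolding b_def by (simp add: add.commute)
  qed
  define D where "D = (\<lambda>x. a x - T x)"
  have Db: "D \<in> bops sc ip" unfolding D_def by (rule bops_diff(1)[OF ab T])
  have adjD: "adj ip D = (\<lambda>x. adj ip a x - T x)" unfolding D_def using adj_diff[OF ab T] sT by simp
  have bT: "(\<lambda>x. b x - T x) = (\<lambda>x. sc (1/2) (D x + adj ip D x))"
  proof
    fix x
    have "sc (1/2) (D x + adj ip D x) = sc (1/2) ((a x + adj ip a x) - (T x + T x))"
      unfolding adjD unfolding D_def by (simp add: algebra_simps)
    also have "\<dots> = b x - T x" unfolding b_def by (simp add: sc_diff_right sc_half)
    finally show "b x - T x = sc (1/2) (D x + adj ip D x)" by simp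
  qed
  have bb: "b \<in> bops sc ip" unfolding b_def by (rule bops_scale(1)[OF bops_plus(1)[OF ab aab]])
  have "opnorm ip (\<lambda>x. T x - b x) = opnorm ip (\<lambda>x. b x - T x)" by (rule opnorm_diff_commute[OF T bb])
  also have "\<dots> \<le> cmod (1/2) * opnorm ip (\<lambda>x. D x + adj ip D x)"
    unfolding bT by (rule bops_scale(2)[OF bops_plus(1)[OF Db adj_bops(1)[OF Db]]])
  also have "\<dots> \<le> (1/2) * (opnorm ip D + opnorm ip (adj ip D))"
    using bops_plus(2)[OF Db adj_bops(1)[OF Db]] by simp
  also have "\<dots> \<le> (1/2) * (opnorm ip D + opnorm ip D)"
    using adj_bops(2)[OF Db] by simp
  also have "opnorm ip D = opnorm ip (\<lambda>x. T x - a x)" unfolding D_def by (rule opnorm_diff_commute[OF ab T])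
  finally show "opnorm ip (\<lambda>x. T x - b x) \<le> opnorm ip (\<lambda>x. T x - a x)" by simp
qed

lemma proj_closure_in_A:
  assumes RA: "R_star_algebra sc ip A" and CA: "commutative_ops A"
  shows "projections ip (norm_closure sc ip A) \<subseteq> A"
  using proj_in_A[OF RA CA] unfolding projections_def is_projection_def by blast

context
  fixes A and \<Phi> :: "('h \<Rightarrow> 'h) \<Rightarrow> ('k::t2_space \<Rightarrow> complex)"
  assumes RA: "R_star_algebra sc ip A" and CA: "commutative_ops A"
    and PHI: "star_iso_onto_C0 sc ip (norm_closure sc ip A) \<Phi>"
begin

abbreviation "BE \<equiv> norm_closure sc ip A"

lemma SA: "star_subalgebra sc ip A" using RA unfolding R_star_algebra_def by blast

lemma zero_dim:
  assumes LC: "locally_compact_space (euclidean :: 'k topology)"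
  shows "zero_dimensional_space TYPE('k)"
  unfolding zero_dimensional_space_def
proof (intro allI impI)
  fix U :: "'k set" and x assume Ux: "open U \<and> x \<in> U"
  have HS: "Hausdorff_space (euclidean :: 'k topology)"
    unfolding Hausdorff_space_def disjnt_def using hausdorff by fastforce
  have "neighbourhood_base_of (compactin euclidean) (euclidean :: 'k topology)"
    using locally_compact_space_neighbourhood_base[of euclidean] HS LC by blast
  then obtain U0 M0 where U0: "open U0" "compact M0" "x \<in> U0" "U0 \<subseteq> M0" "M0 \<subseteq> U"
    unfolding neighbourhood_base_of using Ux by (metis open_openin compactin_euclidean_iff)
  have CR: "completely_regular_space (euclidean :: 'k topology)"
    using locally_compact_regular_imp_completely_regular_space[OF LC] HS by blast
  have "closedin euclidean (- U0)" using U0(1) by (simp add: closed_closedin[symmetric] closed_Compl)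
  moreover have "x \<in> topspace euclidean - (- U0)" using U0(3) by simp
  ultimately obtain f :: "'k \<Rightarrow> real" where fcm: "continuous_map euclidean (top_of_set {0..1}) f"
    and fx: "f x = 0" and f1: "f ` (- U0) \<subseteq> {1}"
    using CR unfolding completely_regular_space_def by metis
  have fc: "continuous_on UNIV f" using fcm by (simp add: continuous_map_in_subtopology)
  define phi where "phi = (\<lambda>t. complex_of_real (1 - f t))"
  have phic: "continuous_on UNIV phi" unfolding phi_def using fc by (auto intro!: continuous_intros)
  have phiU0: "phi t \<noteq> 0 \<Longrightarrow> t \<in> U0" for t using f1 unfolding phi_def by auto
  have phiC: "phi \<in> C0" unfolding C0_def
  proof (intro CollectI conjI allI impI phic)
    fix e :: real assume e: "e > 0"
    have cl: "closed {t. e \<le> norm (phi t)}"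
      by (rule closed_Collect_le) (auto intro!: continuous_intros phic)
    have "{t. e \<le> norm (phi t)} = M0 \<inter> {t. e \<le> norm (phi t)}" using e phiU0 U0(4) by force
    then show "compact {t. e \<le> norm (phi t)}" using U0(2) cl by (metis compact_Int_closed)
  qed
  define T where "T = inv_into BE \<Phi> phi"
  have TB: "T \<in> BE" unfolding T_def by (rule P_inv_B[OF SA PHI phiC])
  have Tphi: "\<Phi> T = phi" unfolding T_def by (rule P_inv_eq[OF SA PHI phiC])
  have Tb: "T \<in> bops sc ip" by (rule B_bops[OF SA TB])
  have sT: "adj ip T = T" by (rule P_real_sym[OF SA PHI TB]) (simp add: Tphi phi_def)
  obtain a where aA: "a \<in> A" and ae: "opnorm ip (\<lambda>x. T x - a x) < 1/4"
    using closure_approx[OF SA TB, of "1/4"] by auto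
  have ab: "a \<in> bops sc ip" by (rule ss_bops[OF SA aA])
  define b where "b = (\<lambda>x. sc (1/2) (a x + adj ip a x))"
  have bA: "b \<in> A" unfolding b_def by (rule ss_scale[OF SA ss_plus[OF SA aA ss_adj[OF SA aA]]])
  have bB: "b \<in> BE" by (rule B_A[OF SA bA])
  have sb: "adj ip b = b" unfolding b_def by (rule sym_approx(2)[OF Tb sT ab])
  have Tbn: "opnorm ip (\<lambda>x. T x - b x) < 1/4" using sym_approx(1)[OF Tb sT ab] ae unfolding b_def by simp
  define g where "g = \<Phi> b"
  have gr: "Im (g t) = 0" for t unfolding g_def by (rule P_sym_real[OF SA PHI bB sb])
  have gC: "g \<in> C0" unfolding g_def by (rule P_C0[OF SA PHI bB])
  have gc: "continuous_on UNIV g" by (rule C0_cont[OF gC])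
  have cB: "(\<lambda>x. T x - b x) \<in> BE" by (rule B_diff[OF SA TB bB])
  have Pc: "\<Phi> (\<lambda>x. T x - b x) = (\<lambda>t. phi t - g t)" unfolding g_def Tphi[symmetric] by (rule P_diff[OF SA PHI TB bB])
  have close: "cmod (phi t - g t) < 1/4" for t
  proof -
    have "cmod (\<Phi> (\<lambda>x. T x - b x) t) \<le> opnorm ip (\<lambda>x. T x - b x)"
      by (rule hard_bound[OF SA PHI cB]) (simp add: Pc phi_def gr)
    then show ?thesis using Tbn Pc by simp
  qed
  have finb: "finite (op_spectrum sc ip b)" using RA bA sb unfolding R_star_algebra_def by blast
  have gvals: "g t \<in> insert 0 (op_spectrum sc ip b)" for t
  proof (cases "g t = 0")
    case False
    then show ?thesis using hard_dir[OF SA PHI bB, of t] P_sym_real[OF SA PHI bB sb] unfolding g_def by auto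
  qed simp
  define V where "V = {t. 1/2 < Re (g t)}"
  have "open V" unfolding V_def by (rule open_Collect_less) (auto intro!: continuous_intros gc)
  moreover have "closed V"
  proof -
    define F where "F = {s \<in> insert 0 (op_spectrum sc ip b). 1/2 < Re s}"
    have "closed F" unfolding F_def using finb by (intro finite_imp_closed) auto
    then have "closed (g -` F \<inter> UNIV)" using gc continuous_on_closed_vimage[OF closed_UNIV] by blast
    moreover have "V = g -` F \<inter> UNIV" unfolding V_def F_def using gvals by auto
    ultimately show ?thesis by simp
  qed
  moreover have "x \<in> V"
  proof -
    have "phi x = 1" unfolding phi_def using fx by simp
    then have "cmod (1 - g x) < 1/4" using close[of x] by simp
    moreover have "Re (1 - g x) \<le> cmod (1 - g x)" by (rule complex_Re_le_cmod)
    ultimately show ?thesis unfolding V_def by simp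
  qed
  moreover have "V \<subseteq> U"
  proof
    fix t assume "t \<in> V"
    then have "1/2 < Re (g t)" unfolding V_def by simp
    moreover have "Re (g t - phi t) \<le> cmod (g t - phi t)" by (rule complex_Re_le_cmod)
    moreover have "cmod (g t - phi t) < 1/4" using close[of t] by (simp add: norm_minus_commute)
    ultimately have "Re (phi t) > 0" by simp
    then have "phi t \<noteq> 0" by auto
    then show "t \<in> U" using phiU0 U0 by auto
  qed
  ultimately show "\<exists>V. open V \<and> closed V \<and> x \<in> V \<and> V \<subseteq> U" by blast
qed

end
end


context hilb begin

context
  fixes A and \<Phi> :: "('h \<Rightarrow> 'h) \<Rightarrow> ('k::t2_space \<Rightarrow> complex)"
  assumes RA: "R_star_algebra sc ip A" and CA: "commutative_ops A"
    and PHI: "star_iso_onto_C0 sc ip (norm_closure sc ip A) \<Phi>"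
begin

abbreviation "BF \<equiv> norm_closure sc ip A"

lemma SA': "star_subalgebra sc ip A" using RA unfolding R_star_algebra_def by blast

lemma ind_eq_iff: "((indicator S :: 'a \<Rightarrow> complex) = indicator T) \<longleftrightarrow> S = T"
proof
  assume h: "(indicator S :: 'a \<Rightarrow> complex) = indicator T"
  show "S = T"
  proof (rule set_eqI)
    fix t show "t \<in> S \<longleftrightarrow> t \<in> T" using fun_cong[OF h, of t] by (simp add: indicator_def of_bool_def split: if_splits)
  qed
qed simp

lemma ind_mult: "(\<lambda>t. (indicator U t :: complex) * indicator V t) = indicator (U \<inter> V)"
  by (auto simp: indicator_def)

lemma PU_facts:
  assumes U: "compact U" "open U"
  defines "P \<equiv> inv_into BF \<Phi> (indicator U)"
  shows "P \<in> BF" "\<Phi> P = indicator U" "P \<in> projections ip A"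
proof -
  have iC: "(indicator U :: 'k \<Rightarrow> complex) \<in> C0" by (rule indicator_C0[OF U])
  show PB: "P \<in> BF" unfolding P_def by (rule P_inv_B[OF SA' PHI iC])
  show PP: "\<Phi> P = indicator U" unfolding P_def by (rule P_inv_eq[OF SA' PHI iC])
  have idem: "P \<circ> P = P"
  proof (rule P_inj[OF SA' PHI B_comp[OF SA' PB PB] PB])
    show "\<Phi> (P \<circ> P) = \<Phi> P" unfolding P_mult[OF SA' PHI PB PB] PP ind_mult by simp
  qed
  have sa: "adj ip P = P"
  proof (rule P_real_sym[OF SA' PHI PB])
    fix t show "Im (\<Phi> P t) = 0" unfolding PP by (simp add: indicator_def)
  qed
  have "P \<in> projections ip BF" unfolding projections_def is_projection_def using PB idem sa by blast
  then have "P \<in> A" using proj_closure_in_A[OF RA CA] by blast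
  then show "P \<in> projections ip A" unfolding projections_def is_projection_def using idem sa by blast
qed

lemma bij_part:
  "bij_betw (\<lambda>U. inv_into BF \<Phi> (indicator U)) {U :: 'k set. compact U \<and> open U} (projections ip A)"
  unfolding bij_betw_def
proof (intro conjI)
  show "inj_on (\<lambda>U. inv_into BF \<Phi> (indicator U)) {U :: 'k set. compact U \<and> open U}"
  proof (rule inj_onI)
    fix U V :: "'k set" assume U: "U \<in> {U. compact U \<and> open U}" and V: "V \<in> {U. compact U \<and> open U}"
      and eq: "inv_into BF \<Phi> (indicator U) = inv_into BF \<Phi> (indicator V)"
    have cU: "compact U" "open U" using U by auto
    have cV: "compact V" "open V" using V by auto
    have "(indicator U :: 'k \<Rightarrow> complex) = \<Phi> (inv_into BF \<Phi> (indicator U))" using PU_facts(2)[OF cU] by simp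
    also have "\<dots> = \<Phi> (inv_into BF \<Phi> (indicator V))" using eq by simp
    also have "\<dots> = indicator V" using PU_facts(2)[OF cV] .
    finally have "(indicator U :: 'k \<Rightarrow> complex) = indicator V" .
    then show "U = V" by (simp add: ind_eq_iff)
  qed
  show "(\<lambda>U. inv_into BF \<Phi> (indicator U)) ` {U. compact U \<and> open U} = projections ip A"
  proof
    show "(\<lambda>U. inv_into BF \<Phi> (indicator U)) ` {U :: 'k set. compact U \<and> open U} \<subseteq> projections ip A"
      using PU_facts(3) by auto
  next
    show "projections ip A \<subseteq> (\<lambda>U. inv_into BF \<Phi> (indicator U)) ` {U :: 'k set. compact U \<and> open U}"
    proof
      fix p assume p: "p \<in> projections ip A"
      then have pA: "p \<in> A" and idem: "p \<circ> p = p" and sa: "adj ip p = p"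
        unfolding projections_def is_projection_def by auto
      have pB: "p \<in> BF" by (rule B_A[OF SA' pA])
      define f where "f = \<Phi> p"
      have fC: "f \<in> C0" unfolding f_def by (rule P_C0[OF SA' PHI pB])
      have "\<Phi> (p \<circ> p) = (\<lambda>t. f t * f t)" unfolding f_def by (rule P_mult[OF SA' PHI pB pB])
      then have ffe: "f = (\<lambda>t. f t * f t)" unfolding idem f_def .
      have ff: "f t * f t = f t" for t using fun_cong[OF ffe, of t] by simp
      have fr: "Im (f t) = 0" for t unfolding f_def by (rule P_sym_real[OF SA' PHI pB sa])
      have f01: "f t = 0 \<or> f t = 1" for t
      proof -
        have "f t * (f t - 1) = 0" using ff[of t] by (simp add: algebra_simps)
        then show ?thesis by auto
      qed
      define U where "U = {t. f t = 1}"
      have fU: "f = indicator U" unfolding U_def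
      proof
        fix t show "f t = indicator {t. f t = 1} t" using f01[of t] by (auto simp: indicator_def)
      qed
      have "U = {t. 1/2 \<le> norm (f t)}"
      proof (rule set_eqI)
        fix t show "t \<in> U \<longleftrightarrow> t \<in> {t. 1/2 \<le> norm (f t)}" unfolding U_def using f01[of t] by auto
      qed
      then have cU: "compact U" using C0_compact[OF fC, of "1/2"] by simp
      have Ueq: "U = f -` {s. cmod (s - 1) < 1/2} \<inter> UNIV"
      proof (rule set_eqI)
        fix t show "t \<in> U \<longleftrightarrow> t \<in> f -` {s. cmod (s - 1) < 1/2} \<inter> UNIV" unfolding U_def using f01[of t] by auto
      qed
      have oS: "open {s. cmod (s - 1) < (1/2 :: real)}"
        by (rule open_Collect_less) (auto intro!: continuous_intros)
      have vim: "\<forall>B. open B \<longrightarrow> open (f -` B \<inter> UNIV)"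
        using C0_cont[OF fC] continuous_on_open_vimage[OF open_UNIV] by blast
      have "open (f -` {s. cmod (s - 1) < (1/2 :: real)} \<inter> UNIV)" using vim oS by blast
      then have oU: "open U" unfolding Ueq .
      have "inv_into BF \<Phi> (indicator U) = p" using P_inv_of[OF SA' PHI pB] unfolding fU[symmetric] f_def .
      then show "p \<in> (\<lambda>U. inv_into BF \<Phi> (indicator U)) ` {U. compact U \<and> open U}"
        using cU oU by blast
    qed
  qed
qed

lemma order_part:
  assumes U: "compact U" "open U" and V: "compact V" "open V"
  shows "U \<subseteq> V \<longleftrightarrow> proj_le (inv_into BF \<Phi> (indicator U)) (inv_into BF \<Phi> (indicator V))"
proof -
  define P where "P = inv_into BF \<Phi> (indicator U)"
  define Q where "Q = inv_into BF \<Phi> (indicator V)"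
  have PB: "P \<in> BF" and PP: "\<Phi> P = indicator U" unfolding P_def using PU_facts[OF U] by auto
  have QB: "Q \<in> BF" and QQ: "\<Phi> Q = indicator V" unfolding Q_def using PU_facts[OF V] by auto
  have "proj_le P Q \<longleftrightarrow> \<Phi> (P \<circ> Q) = \<Phi> P"
    unfolding proj_le_def using P_inj[OF SA' PHI B_comp[OF SA' PB QB] PB] by metis
  also have "\<dots> \<longleftrightarrow> (indicator (U \<inter> V) :: 'k \<Rightarrow> complex) = indicator U"
    unfolding P_mult[OF SA' PHI PB QB] PP QQ ind_mult ..
  also have "\<dots> \<longleftrightarrow> U \<inter> V = U" by (rule ind_eq_iff)
  also have "\<dots> \<longleftrightarrow> U \<subseteq> V" by blast
  finally show ?thesis unfolding P_def Q_def by simp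
qed

end
end

theorem proposition4p4:
  fixes sc :: "complex \<Rightarrow> 'h::ab_group_add \<Rightarrow> 'h"
    and ip :: "'h \<Rightarrow> 'h \<Rightarrow> complex"
    and A :: "('h \<Rightarrow> 'h) set"
  assumes "complex_hilbert_space sc ip"
    and "R_star_algebra sc ip A"
    and "commutative_ops A"
  shows "projections ip (norm_closure sc ip A) \<subseteq> A \<and>
         (\<forall>\<Phi> :: ('h \<Rightarrow> 'h) \<Rightarrow> ('k::t2_space \<Rightarrow> complex).
           locally_compact_space (euclidean :: 'k topology) \<and>
           star_iso_onto_C0 sc ip (norm_closure sc ip A) \<Phi> \<longrightarrow>
           zero_dimensional_space TYPE('k) \<and>
           bij_betw (\<lambda>U. inv_into (norm_closure sc ip A) \<Phi> (indicator U))
                    {U :: 'k set. compact U \<and> open U} (projections ip A) \<and>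
           (\<forall>U V. compact U \<and> open U \<and> compact V \<and> open V \<longrightarrow>
              (U \<subseteq> V \<longleftrightarrow> proj_le (inv_into (norm_closure sc ip A) \<Phi> (indicator U))
                                     (inv_into (norm_closure sc ip A) \<Phi> (indicator V)))))"
proof -
  interpret hilb sc ip by unfold_locales (rule assms(1))
  show ?thesis
  proof (intro conjI allI impI)
    show "projections ip (norm_closure sc ip A) \<subseteq> A" by (rule proj_closure_in_A[OF assms(2,3)])
  next
    fix \<Phi> :: "('h \<Rightarrow> 'h) \<Rightarrow> ('k::t2_space \<Rightarrow> complex)"
    assume h: "locally_compact_space (euclidean :: 'k topology) \<and> star_iso_onto_C0 sc ip (norm_closure sc ip A) \<Phi>"
    show "zero_dimensional_space TYPE('k)" using zero_dim[OF assms(2,3)] h by blast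
    show "bij_betw (\<lambda>U. inv_into (norm_closure sc ip A) \<Phi> (indicator U))
                    {U :: 'k set. compact U \<and> open U} (projections ip A)"
      using bij_part[OF assms(2,3)] h by blast
    fix U V :: "'k set"
    assume "compact U \<and> open U \<and> compact V \<and> open V"
    then show "U \<subseteq> V \<longleftrightarrow> proj_le (inv_into (norm_closure sc ip A) \<Phi> (indicator U))
                                     (inv_into (norm_closure sc ip A) \<Phi> (indicator V))"
      using order_part[OF assms(2,3)] h by blast
  qed
qed


end
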